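(* Let $B=\sum_{i=1}^{k-1}B_iz^{-i-1}dz\in O_B$ and $\Xi=\Phi(B)\in\mathrm{Rep}_{\widehat{\mathsf{Q}}}(V)$. (i) For any $\Xi$-invariant subspace $W=(W_p)_{p\in J_0}$ of $V$ (i.e. $W_p\subset V_p$ and $\Xi_\alpha(W_{s(\alpha)})\subset W_{t(\alpha)}$ for all arrows $\alpha$ of $\widehat{\mathsf{Q}}$), the subspace $S=\bigoplus_pW_p\subset\mathbb{C}^n$ is invariant under all $B_i$. (ii) Any subspace $S\subset\mathbb{C}^n$ invariant under all $B_i$ satisfies $S=\bigoplus_{p\in J_0}(S\cap V_p)$, and $W=(S\cap V_p)_{p\in J_0}$ is a $\Xi$-invariant subspace of $V$.
   Context: Let $\mathfrak{g}=\mathfrak{gl}_n(\mathbb{C})$ with a Cartan subalgebra $\mathfrak{t}$, $k>1$, $T=\sum_{i=1}^{k-1}T_iz^{-i}$, $T_i\in\mathfrak{t}$, $T_{k-1}\ne0$, $dT=\sum_i(-iT_i)z^{-i-1}dz$. $B_k=\{\sum_{i=0}^{k-1}b_iz^i:b_0=1\}\subset\mathrm{GL}_n(\mathbb{C}[z]/(z^k))$; $\mathfrak{b}_k^*=\{\sum_{i=1}^{k-1}X_iz^{-i-1}dz\}$ via $\mathrm{res}_{z=0}\mathrm{tr}$, coadjoint action $\mathrm{Ad}^*_bB=$ part of $bBb^{-1}$ in degrees $z^{-i-1}dz$, $1\le i\le k-1$; $O_B$ is the $B_k$-orbit of $dT$. For $i=0,\dots,k-2$, $\mathbb{C}^n=\bigoplus_{p\in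 J_i}V^{(i)}_p$ is the decomposition into simultaneous eigenspaces of $(T_{i+1},\dots,T_{k-1})$, $\pi_i:J_0\to J_i$ natural maps; total orders on the $J_i$ with $\pi_{i+1}(p)<\pi_{i+1}(q)\Rightarrow p<q$. $\mathfrak{p}_i^+=\bigoplus_{p\ge q}\mathrm{Hom}(V^{(i)}_p,V^{(i)}_q)$, $\mathfrak{p}_i^-=\bigoplus_{p\le q}$, $\mathfrak{u}_i^\pm=\bigoplus_{p\gtrless q}$, with $\mathfrak{p}^\pm_{k-1}=\mathfrak{g}$, $\mathfrak{u}^\pm_{k-1}=0$. Each $b\in B_k$ factors uniquely $b=b_-b_+$ with $(b_-)_i\in\mathfrak{u}_i^-$, $(b_+)_i\in\mathfrak{p}_i^+$. For $B=\mathrm{Ad}^*_b(dT)$, $B'$ is the part of $b_-^{-1}B$ in degrees $z^{-i-1}dz$ ($1\le i\le k-1$), $Q=b_--1=\sum Q_iz^i$, $P=\sum P_iz^{-i-1}dz$ with $P_i$ the $\mathfrak{u}_i^+$-component of $B'_i$ along $\mathfrak{g}=\mathfrak{u}_i^+\oplus\mathfrak{p}_i^-$. Quiver $\mathsf{Q}$: vertices $J_0$, $V_p=V^{(0)}_p$, for $p<q$ arrows $\alpha_{qp;i}:p\to q$ for $i=1,\dots,m_{p,q}$, $m_{p,q}=\max\{i\in\{0,\dots,k-2\}:\pi_i(p)<\pi_i(q)\}$; $\widehat{\mathsf{Q}}$ its double. $\Phi(B)=\Xi$ where $\Xi_{\alpha_{qp;i}}$ is the $\mathrm{Hom}(V_p,V_q)$-block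 of $Q_i$ and $\Xi_{\bar\alpha_{qp;i}}$ the $\mathrm{Hom}(V_q,V_p)$-block of $P_i$. *)

theory Defs
  imports "HOL-Analysis.Analysis"
begin

(* Matrices in gl_n(C) are  complex^'n^'n  (n = CARD('n)); vectors of C^n are complex^'n.
   A truncated series  sum_i b_i z^i  (mod z^k) is a coefficient function  nat => matrix;
   an element  sum_i X_i z^(-i-1) dz  of b_k^* is a coefficient function X with X i = X_i
   (only 1 <= i <= k-1 are used). *)

type_synonym 'n cmat = "complex^'n^'n"

definition is_diag :: "'n::finite cmat \<Rightarrow> bool" where
  "is_diag A \<longleftrightarrow> (\<forall>a b. a \<noteq> b \<longrightarrow> A $ a $ b = 0)"

definition tmul :: "(nat \<Rightarrow> 'n::finite cmat) \<Rightarrow> (nat \<Rightarrow> 'n cmat) \<Rightarrow> nat \<Rightarrow> 'n cmat" where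
  "tmul f g i = (\<Sum>j\<le>i. f j ** g (i - j))"

function tinv :: "(nat \<Rightarrow> 'n::finite cmat) \<Rightarrow> nat \<Rightarrow> 'n cmat" where
  "tinv f m = (if m = 0 then mat 1 else - (\<Sum>j\<in>{1..m}. f j ** tinv f (m - j)))"
  by auto
termination by (relation "Wellfounded.measure snd") auto

(* coadjoint action: coefficient of z^(-m-1) dz of  b X b^{-1} *)
definition coad :: "nat \<Rightarrow> (nat \<Rightarrow> 'n::finite cmat) \<Rightarrow> (nat \<Rightarrow> 'n cmat) \<Rightarrow> nat \<Rightarrow> 'n cmat" where
  "coad k b X m = (\<Sum>j<k. \<Sum>l<k. if m + j + l < k then b j ** X (m + j + l) ** tinv b l else 0)"

(* dT = sum_i (-i T_i) z^(-i-1) dz *)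
definition dT :: "(nat \<Rightarrow> 'n::finite cmat) \<Rightarrow> nat \<Rightarrow> 'n cmat" where
  "dT T i = - scaleR (real i) (T i)"

(* label of basis index a in J_i : the simultaneous eigenvalues of (T_{i+1},...,T_{k-1}) *)
definition key :: "nat \<Rightarrow> (nat \<Rightarrow> 'n::finite cmat) \<Rightarrow> nat \<Rightarrow> 'n \<Rightarrow> complex list" where
  "key k T i a = map (\<lambda>l. T l $ a $ a) [Suc i..<k]"

definition J :: "nat \<Rightarrow> (nat \<Rightarrow> 'n::finite cmat) \<Rightarrow> nat \<Rightarrow> complex list set" where
  "J k T i = key k T i ` UNIV"

definition pi_J :: "nat \<Rightarrow> complex list \<Rightarrow> complex list" where
  "pi_J i p = drop i p"

(* strict order on J_i (given for i <= k-2; J_{k-1} is a single point) *)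
definition ltJ :: "nat \<Rightarrow> (nat \<Rightarrow> (complex list \<times> complex list) set) \<Rightarrow> nat \<Rightarrow> complex list \<Rightarrow> complex list \<Rightarrow> bool" where
  "ltJ k ord i p q \<longleftrightarrow> i < k - 1 \<and> (p, q) \<in> ord i"

definition leJ :: "nat \<Rightarrow> (nat \<Rightarrow> (complex list \<times> complex list) set) \<Rightarrow> nat \<Rightarrow> complex list \<Rightarrow> complex list \<Rightarrow> bool" where
  "leJ k ord i p q \<longleftrightarrow> p = q \<or> ltJ k ord i p q"

definition Vsp :: "nat \<Rightarrow> (nat \<Rightarrow> 'n::finite cmat) \<Rightarrow> nat \<Rightarrow> complex list \<Rightarrow> (complex^'n) set" where
  "Vsp k T i p = {v. \<forall>a. key k T i a \<noteq> p \<longrightarrow> v $ a = 0}"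

(* X $ a $ b is the component of X mapping e_b (in V_{key b}) to e_a (in V_{key a}) *)
definition p_plus where
  "p_plus k T ord i (X::'n::finite cmat) \<longleftrightarrow>
     (\<forall>a b. X $ a $ b \<noteq> 0 \<longrightarrow> leJ k ord i (key k T i a) (key k T i b))"
definition u_plus where
  "u_plus k T ord i (X::'n::finite cmat) \<longleftrightarrow>
     (\<forall>a b. X $ a $ b \<noteq> 0 \<longrightarrow> ltJ k ord i (key k T i a) (key k T i b))"
definition p_minus where
  "p_minus k T ord i (X::'n::finite cmat) \<longleftrightarrow>
     (\<forall>a b. X $ a $ b \<noteq> 0 \<longrightarrow> leJ k ord i (key k T i b) (key k T i a))"
definition u_minus where
  "u_minus k T ord i (X::'n::finite cmat) \<longleftrightarrow>
     (\<forall>a b. X $ a $ b \<noteq> 0 \<longrightarrow> ltJ k ord i (key k T i b) (key k T i a))"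

(* u_i^+ component along g = u_i^+ (+) p_i^- *)
definition uplus_part :: "nat \<Rightarrow> (nat \<Rightarrow> 'n::finite cmat) \<Rightarrow> (nat \<Rightarrow> (complex list \<times> complex list) set)
    \<Rightarrow> nat \<Rightarrow> 'n cmat \<Rightarrow> 'n cmat" where
  "uplus_part k T ord i X =
     (\<chi> a b. if ltJ k ord i (key k T i a) (key k T i b) then X $ a $ b else 0)"

(* B' : part of b_-^{-1} B in degrees z^(-m-1) dz, 1 <= m <= k-1 *)
definition Bprime :: "nat \<Rightarrow> (nat \<Rightarrow> 'n::finite cmat) \<Rightarrow> (nat \<Rightarrow> 'n cmat) \<Rightarrow> nat \<Rightarrow> 'n cmat" where
  "Bprime k bm B m = (\<Sum>j<k. if m + j < k then tinv bm j ** B (m + j) else 0)"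

definition Pmat where
  "Pmat k T ord bm B i = uplus_part k T ord i (Bprime k bm B i)"

definition Qmat :: "(nat \<Rightarrow> 'n::finite cmat) \<Rightarrow> nat \<Rightarrow> 'n cmat" where
  "Qmat bm i = (if i = 0 then 0 else bm i)"

definition mpq where
  "mpq k ord p q = Max {i. i \<le> k - 2 \<and> ltJ k ord i (pi_J i p) (pi_J i q)}"

(* arrows of the doubled quiver: Fwd p q i = alpha_{qp;i} : p -> q,  Bwd p q i = its reverse *)
datatype arrow = Fwd "complex list" "complex list" nat | Bwd "complex list" "complex list" nat

fun src :: "arrow \<Rightarrow> complex list" where
  "src (Fwd p q i) = p" | "src (Bwd p q i) = q"
fun tgt :: "arrow \<Rightarrow> complex list" where
  "tgt (Fwd p q i) = q" | "tgt (Bwd p q i) = p"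

definition arrows :: "nat \<Rightarrow> (nat \<Rightarrow> 'n::finite cmat) \<Rightarrow> (nat \<Rightarrow> (complex list \<times> complex list) set) \<Rightarrow> arrow set" where
  "arrows k T ord =
     {Fwd p q i | p q i. p \<in> J k T 0 \<and> q \<in> J k T 0 \<and> ltJ k ord 0 p q \<and> 1 \<le> i \<and> i \<le> mpq k ord p q}
   \<union> {Bwd p q i | p q i. p \<in> J k T 0 \<and> q \<in> J k T 0 \<and> ltJ k ord 0 p q \<and> 1 \<le> i \<and> i \<le> mpq k ord p q}"

(* Hom(V_p, V_q)-block of X (for the decomposition into V_p = V^{(0)}_p), extended by 0 *)
definition block :: "nat \<Rightarrow> (nat \<Rightarrow> 'n::finite cmat) \<Rightarrow> 'n cmat \<Rightarrow> complex list \<Rightarrow> complex list \<Rightarrow> 'n cmat" where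
  "block k T X p q = (\<chi> a b. if key k T 0 a = q \<and> key k T 0 b = p then X $ a $ b else 0)"

fun Xi :: "nat \<Rightarrow> (nat \<Rightarrow> 'n::finite cmat) \<Rightarrow> (nat \<Rightarrow> (complex list \<times> complex list) set)
    \<Rightarrow> (nat \<Rightarrow> 'n cmat) \<Rightarrow> (nat \<Rightarrow> 'n cmat) \<Rightarrow> arrow \<Rightarrow> 'n cmat" where
  "Xi k T ord bm B (Fwd p q i) = block k T (Qmat bm i) p q"
| "Xi k T ord bm B (Bwd p q i) = block k T (Pmat k T ord bm B i) q p"

definition Xi_invariant where
  "Xi_invariant k T ord bm B (W :: complex list \<Rightarrow> (complex^'n::finite) set) \<longleftrightarrow>
     (\<forall>p\<in>J k T 0. vec.subspace (W p) \<and> W p \<subseteq> Vsp k T 0 p)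
   \<and> (\<forall>\<alpha>\<in>arrows k T ord. \<forall>w\<in>W (src \<alpha>). Xi k T ord bm B \<alpha> *v w \<in> W (tgt \<alpha>))"

definition invariant_under :: "(complex^'n::finite) set \<Rightarrow> 'n cmat \<Rightarrow> bool" where
  "invariant_under S A \<longleftrightarrow> (\<forall>v\<in>S. A *v v \<in> S)"

end

theory Submission
  imports Defs "HOL-Computational_Algebra.Formal_Power_Series"
begin

typedef (overloaded) ('n::finite) R = "UNIV :: (complex^'n^'n) set" morphisms rep Abs by auto
setup_lifting type_definition_R

instantiation R :: (finite) ring_1
begin
lift_definition zero_R :: "'a R" is "0" .
lift_definition one_R :: "'a R" is "mat 1" .
lift_definition plus_R :: "'a R \<Rightarrow> 'a R \<Rightarrow> 'a R" is "(+)" .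
lift_definition minus_R :: "'a R \<Rightarrow> 'a R \<Rightarrow> 'a R" is "(-)" .
lift_definition uminus_R :: "'a R \<Rightarrow> 'a R" is "uminus" .
lift_definition times_R :: "'a R \<Rightarrow> 'a R \<Rightarrow> 'a R" is "(**)" .
instance
proof
  fix a b c :: "'a R"
  show "a * b * c = a * (b * c)" by transfer (simp add: matrix_mul_assoc)
  show "1 * a = a" by transfer simp
  show "a * 1 = a" by transfer simp
  show "(a + b) * c = a * c + b * c" by transfer (vector matrix_matrix_mult_def sum.distrib[symmetric] field_simps)
  show "a * (b + c) = a * b + a * c" by transfer (simp add: matrix_add_ldistrib)
  show "a + b + c = a + (b + c)" by transfer (simp add: add.assoc)
  show "a + b = b + a" by transfer (simp add: add.commute)
  show "0 + a = a" by transfer simp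
  show "- a + a = 0" by transfer simp
  show "a - b = a + - b" by transfer simp
  show "(0::'a R) \<noteq> 1"
  proof transfer
    show "(0::complex^'a^'a) \<noteq> mat 1"
    proof
      assume "(0::complex^'a^'a) = mat 1"
      have h1: "mat 1 $ i $ i = (1::complex)" for i by (simp add: mat_def)
      have h2: "(0::complex^'a^'a) $ i $ i = 0" for i by simp
      show False using h1[of undefined] h2[of undefined] \<open>0 = mat 1\<close> by (metis zero_neq_one)
    qed
  qed
qed
end

lemma rep_mult: "rep (x * y) = rep x ** rep y" by transfer simp
lemma rep_add: "rep (x + y) = rep x + rep y" by transfer simp
lemma rep_diff: "rep (x - y) = rep x - rep y" by transfer simp
lemma rep_uminus: "rep (- x) = - rep x" by transfer simp
lemma rep_one: "rep 1 = mat 1" by transfer simp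
lemma rep_zero: "rep 0 = 0" by transfer simp
lemma rep_sum: "rep (sum f A) = (\<Sum>x\<in>A. rep (f x))"
  by (induction A rule: infinite_finite_induct) (auto simp: rep_zero rep_add)
lemma Abs_mult: "Abs (x ** y) = Abs x * Abs y" by (metis Abs_inverse UNIV_I rep_inverse rep_mult)
lemma Abs_add: "Abs (x + y) = Abs x + Abs y" by (metis Abs_inverse UNIV_I rep_inverse rep_add)
lemma Abs_uminus: "Abs (- x) = - Abs x" by (metis Abs_inverse UNIV_I rep_inverse rep_uminus)
lemma Abs_one: "Abs (mat 1) = 1" by (metis rep_inverse rep_one)
lemma Abs_zero: "Abs 0 = 0" by (metis rep_inverse rep_zero)
lemma Abs_sum: "Abs (sum f A) = (\<Sum>x\<in>A. Abs (f x))"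
  by (induction A rule: infinite_finite_induct) (auto simp: Abs_zero Abs_add)
lemma rep_Abs[simp]: "rep (Abs x) = x" by (simp add: Abs_inverse)

definition ent :: "'n::finite R \<Rightarrow> 'n \<Rightarrow> 'n \<Rightarrow> complex" where "ent X a b = rep X $ a $ b"

lemma ent_mult: "ent (X * Y) a b = (\<Sum>c\<in>UNIV. ent X a c * ent Y c b)"
  by (simp add: ent_def rep_mult matrix_matrix_mult_def)
lemma ent_add: "ent (X + Y) a b = ent X a b + ent Y a b" by (simp add: ent_def rep_add)
lemma ent_diff: "ent (X - Y) a b = ent X a b - ent Y a b" by (simp add: ent_def rep_diff)
lemma ent_uminus: "ent (- X) a b = - ent X a b" by (simp add: ent_def rep_uminus)
lemma ent_one: "ent 1 a b = (if a = b then 1 else 0)" by (simp add: ent_def rep_one mat_def)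
lemma ent_zero: "ent 0 a b = 0" by (simp add: ent_def rep_zero)
lemma ent_sum: "ent (sum f A) a b = (\<Sum>x\<in>A. ent (f x) a b)" by (simp add: ent_def rep_sum)
lemma R_eqI: "(\<And>a b. ent X a b = ent Y a b) \<Longrightarrow> X = Y"
  unfolding ent_def by (metis rep_inject vec_eq_iff)

definition had :: "('n::finite \<Rightarrow> 'n \<Rightarrow> complex) \<Rightarrow> 'n R \<Rightarrow> 'n R" where
  "had w X = Abs (\<chi> a b. w a b * ent X a b)"
lemma ent_had[simp]: "ent (had w X) a b = w a b * ent X a b" by (simp add: had_def ent_def)

definition gm :: "(nat \<Rightarrow> 'a::ring_1) \<Rightarrow> (nat \<Rightarrow> 'a) \<Rightarrow> nat \<Rightarrow> 'a" where
  "gm f g i = (\<Sum>j\<le>i. f j * g (i - j))"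

fun ginv :: "(nat \<Rightarrow> 'a::ring_1) \<Rightarrow> nat \<Rightarrow> 'a" where
  "ginv f m = (if m = 0 then 1 else - (\<Sum>j\<in>{1..m}. f j * ginv f (m - j)))"
declare ginv.simps[simp del]

definition unit :: "nat \<Rightarrow> 'a::ring_1" where "unit i = (if i = 0 then 1 else 0)"

definition lm :: "nat \<Rightarrow> (nat \<Rightarrow> 'a::ring_1) \<Rightarrow> (nat \<Rightarrow> 'a) \<Rightarrow> nat \<Rightarrow> 'a" where
  "lm K g x i = (\<Sum>j<K. if i + j < K then g j * x (i + j) else 0)"
definition rm :: "nat \<Rightarrow> (nat \<Rightarrow> 'a::ring_1) \<Rightarrow> (nat \<Rightarrow> 'a) \<Rightarrow> nat \<Rightarrow> 'a" where
  "rm K x g i = (\<Sum>j<K. if i + j < K then x (i + j) * g j else 0)"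

lemma gm_fps: "gm f g i = fps_nth (Abs_fps f * Abs_fps g) i"
  by (simp add: gm_def fps_mult_nth atLeast0AtMost)

lemma gm_assoc: "gm (gm f g) h i = gm f (gm g h) i"
proof -
  have "Abs_fps (gm f g) = Abs_fps f * Abs_fps g" by (simp add: fps_eq_iff gm_fps)
  moreover have "Abs_fps (gm g h) = Abs_fps g * Abs_fps h" by (simp add: fps_eq_iff gm_fps)
  ultimately show ?thesis by (simp add: gm_fps mult.assoc)
qed

lemma gm_unit_left[simp]: "gm unit f i = f i"
  by (simp add: gm_def unit_def if_distrib if_distribR cong: if_cong)
lemma gm_unit_right[simp]: "gm f unit i = f i"
proof -
  have "gm f unit i = (\<Sum>j\<le>i. if j = i then f j else 0)"
    unfolding gm_def by (rule sum.cong) (auto simp: unit_def)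
  then show ?thesis by simp
qed

lemma gm_ginv_right: assumes "f 0 = 1" shows "gm f (ginv f) i = unit i"
proof (cases "i = 0")
  case True then show ?thesis by (simp add: gm_def unit_def assms ginv.simps)
next
  case False
  have "{..i} = insert 0 {1..i}" by auto
  then have "gm f (ginv f) i = f 0 * ginv f i + (\<Sum>j\<in>{1..i}. f j * ginv f (i - j))"
    by (simp add: gm_def)
  also have "\<dots> = 0"
  proof -
    have "ginv f i = - (\<Sum>j\<in>{1..i}. f j * ginv f (i - j))" using False by (subst ginv.simps) simp
    then show ?thesis using assms by simp
  qed
  finally show ?thesis using False by (simp add: unit_def)
qed

lemma ginv0[simp]: "ginv f 0 = 1" by (simp add: ginv.simps)

lemma gm_ginv_left: assumes "f 0 = 1" shows "gm (ginv f) f i = unit i"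
proof -
  let ?F = "Abs_fps f" and ?G = "Abs_fps (ginv f)" and ?H = "Abs_fps (ginv (ginv f))"
  have u: "Abs_fps unit = (1::'a fps)" by (simp add: fps_eq_iff unit_def)
  have FG: "?F * ?G = 1" using gm_ginv_right[of f, OF assms] by (simp add: fps_eq_iff gm_fps[symmetric] u[symmetric])
  have GH: "?G * ?H = 1" using gm_ginv_right[of "ginv f"] by (simp add: fps_eq_iff gm_fps[symmetric] u[symmetric])
  have "?F = ?F * (?G * ?H)" using GH by simp
  also have "\<dots> = ?H" using FG by (simp add: mult.assoc[symmetric])
  finally have "?G * ?F = 1" using GH by simp
  then show ?thesis by (simp add: gm_fps u[symmetric])
qed

lemma ginv_prefix: assumes "\<forall>j<K. f j = f' j" shows "m < K \<Longrightarrow> ginv f m = ginv f' m"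
proof (induction m rule: less_induct)
  case (less m)
  show ?case
    apply (subst (1 2) ginv.simps)
    using less assms by (auto intro!: sum.cong)
qed

lemma gm_prefix: assumes "\<forall>j<K. f j = f' j" "\<forall>j<K. g j = g' j" shows "i < K \<Longrightarrow> gm f g i = gm f' g' i"
  using assms by (auto simp: gm_def intro!: sum.cong)

lemma pair_reindex:
  fixes F :: "nat \<Rightarrow> nat \<Rightarrow> 'a::comm_monoid_add"
  shows "(\<Sum>j<K. if i + j < K then (\<Sum>l<K. if i + j + l < K then F j l else 0) else 0)
       = (\<Sum>s<K. if i + s < K then (\<Sum>j\<le>s. F j (s - j)) else 0)"
proof -
  have "(\<Sum>j<K. if i + j < K then (\<Sum>l<K. if i + j + l < K then F j l else 0) else 0)
      = (\<Sum>j<K. \<Sum>l<K. if i + j + l < K then F j l else 0)"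
    by (rule sum.cong) auto
  also have "\<dots> = (\<Sum>(j,l)\<in>{..<K}\<times>{..<K}. if i + j + l < K then F j l else 0)"
    by (simp add: sum.cartesian_product)
  also have "\<dots> = (\<Sum>(j,l)\<in>{(j,l). i + j + l < K}. F j l)"
    by (rule sum.mono_neutral_cong_right) (auto simp: split: if_splits)
  also have "\<dots> = (\<Sum>(s,j)\<in>{(s,j). i + s < K \<and> j \<le> s}. F j (s - j))"
    by (rule sum.reindex_bij_witness[where i="\<lambda>(s,j). (j, s - j)" and j="\<lambda>(j,l). (j + l, j)"]) auto
  also have "\<dots> = (\<Sum>(s,j)\<in>{..<K}\<times>{..<K}. if i + s < K \<and> j \<le> s then F j (s - j) else 0)"
    by (rule sum.mono_neutral_cong_left) (auto simp: split: if_splits)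
  also have "\<dots> = (\<Sum>s<K. \<Sum>j<K. if i + s < K \<and> j \<le> s then F j (s - j) else 0)"
    by (simp add: sum.cartesian_product)
  also have "\<dots> = (\<Sum>s<K. if i + s < K then (\<Sum>j\<le>s. F j (s - j)) else 0)"
  proof (rule sum.cong[OF refl])
    fix s assume s: "s \<in> {..<K}"
    show "(\<Sum>j<K. if i + s < K \<and> j \<le> s then F j (s - j) else 0) = (if i + s < K then \<Sum>j\<le>s. F j (s - j) else 0)"
    proof (cases "i + s < K")
      case True
      have "(\<Sum>j<K. if i + s < K \<and> j \<le> s then F j (s - j) else 0) = (\<Sum>j\<in>{..s}. F j (s - j))"
        using True by (intro sum.mono_neutral_cong_right) auto
      then show ?thesis using True by simp
    qed simp
  qed
  finally show ?thesis .
qed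

lemma lm_lm: "lm K g (lm K h x) i = lm K (gm g h) x i"
proof -
  have "lm K g (lm K h x) i = (\<Sum>j<K. if i + j < K then (\<Sum>l<K. if i + j + l < K then g j * h l * x (i + j + l) else 0) else 0)"
    by (auto simp: lm_def sum_distrib_left mult.assoc if_distrib intro!: sum.cong)
  also have "\<dots> = (\<Sum>s<K. if i + s < K then (\<Sum>j\<le>s. g j * h (s - j) * x (i + (j + (s - j)))) else 0)"
    by (subst pair_reindex) (auto intro!: sum.cong if_cong)
  also have "\<dots> = lm K (gm g h) x i"
    by (auto simp: lm_def gm_def sum_distrib_right intro!: sum.cong)
  finally show ?thesis .
qed

lemma rm_rm: "rm K (rm K x g) h i = rm K x (gm g h) i"
proof -
  have "rm K (rm K x g) h i = (\<Sum>j<K. if i + j < K then (\<Sum>l<K. if i + j + l < K then x (i + (j + l)) * g l * h j else 0) else 0)"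
    by (auto simp: rm_def sum_distrib_right add.assoc intro!: sum.cong)
  also have "\<dots> = (\<Sum>s<K. if i + s < K then (\<Sum>j\<le>s. x (i + s) * g (s - j) * h j) else 0)"
    by (subst pair_reindex) (auto intro!: sum.cong if_cong)
  also have "\<dots> = (\<Sum>s<K. if i + s < K then (\<Sum>j\<le>s. x (i + s) * g j * h (s - j)) else 0)"
  proof (rule sum.cong[OF refl])
    fix s
    have "(\<Sum>j\<le>s. x (i + s) * g (s - j) * h j) = (\<Sum>j\<le>s. x (i + s) * g j * h (s - j))"
      by (rule sum.reindex_bij_witness[where i="\<lambda>j. s - j" and j="\<lambda>j. s - j"]) auto
    then show "(if i + s < K then \<Sum>j\<le>s. x (i + s) * g (s - j) * h j else 0) = (if i + s < K then \<Sum>j\<le>s. x (i + s) * g j * h (s - j) else 0)" by simp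
  qed
  also have "\<dots> = rm K x (gm g h) i"
    by (auto simp: rm_def gm_def sum_distrib_left mult.assoc intro!: sum.cong)
  finally show ?thesis .
qed

lemma lm_rm: "lm K g (rm K x h) i = rm K (lm K g x) h i"
proof -
  have "lm K g (rm K x h) i = (\<Sum>j<K. \<Sum>l<K. if i + j + l < K then g j * x (i + j + l) * h l else 0)"
    by (auto simp: lm_def rm_def sum_distrib_left mult.assoc add.assoc intro!: sum.cong)
  also have "\<dots> = (\<Sum>l<K. \<Sum>j<K. if i + j + l < K then g j * x (i + j + l) * h l else 0)"
    by (rule sum.swap)
  also have "\<dots> = rm K (lm K g x) h i"
    by (auto simp: lm_def rm_def sum_distrib_right ac_simps intro!: sum.cong)
  finally show ?thesis .
qed

lemma lm_unit: "i < K \<Longrightarrow> lm K unit x i = x i"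
proof -
  assume "i < K"
  then have "lm K unit x i = (\<Sum>j<K. if j = 0 then x i else 0)"
    unfolding lm_def by (intro sum.cong) (auto simp: unit_def)
  then show ?thesis using \<open>i < K\<close> by simp
qed
lemma rm_unit: "i < K \<Longrightarrow> rm K x unit i = x i"
proof -
  assume "i < K"
  then have "rm K x unit i = (\<Sum>j<K. if j = 0 then x i else 0)"
    unfolding rm_def by (intro sum.cong) (auto simp: unit_def)
  then show ?thesis using \<open>i < K\<close> by simp
qed

lemma lm_cong: "(\<forall>j<K. g j = g' j) \<Longrightarrow> (\<forall>j. i \<le> j \<longrightarrow> j < K \<longrightarrow> x j = x' j) \<Longrightarrow> lm K g x i = lm K g' x' i"
  by (auto simp: lm_def intro!: sum.cong)
lemma rm_cong: "(\<forall>j<K. g j = g' j) \<Longrightarrow> (\<forall>j. i \<le> j \<longrightarrow> j < K \<longrightarrow> x j = x' j) \<Longrightarrow> rm K x g i = rm K x' g' i"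
  by (auto simp: rm_def intro!: sum.cong)

locale ctx =
  fixes k :: nat and T :: "nat \<Rightarrow> complex^'n::finite^'n" and ord :: "nat \<Rightarrow> (complex list \<times> complex list) set"
  assumes k: "k > 1"
    and T_cartan: "\<forall>i\<in>{1..k-1}. is_diag (T i)"
    and ord_total: "\<forall>i\<le>k-2. strict_linear_order_on (J k T i) (ord i)"
    and ord_compat: "\<forall>i. i + 1 \<le> k - 2 \<longrightarrow> (\<forall>p\<in>J k T i. \<forall>q\<in>J k T i.
                       (pi_J 1 p, pi_J 1 q) \<in> ord (i + 1) \<longrightarrow> (p, q) \<in> ord i)"
begin

abbreviation kk :: "nat \<Rightarrow> 'n \<Rightarrow> complex list" where "kk i a \<equiv> key k T i a"

definition dif :: "nat \<Rightarrow> 'n \<Rightarrow> 'n \<Rightarrow> bool" where "dif i a b \<longleftrightarrow> kk i a \<noteq> kk i b"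
definition prec :: "'n \<Rightarrow> 'n \<Rightarrow> bool" where "prec a b \<longleftrightarrow> ltJ k ord 0 (kk 0 a) (kk 0 b)"

lemma key_drop: "i \<le> j \<Longrightarrow> kk j a = drop (j - i) (kk i a)"
  by (simp add: key_def drop_map)

lemma key_Cons: "i < k - 1 \<Longrightarrow> kk i a = T (Suc i) $ a $ a # kk (Suc i) a"
  by (simp add: key_def upt_conv_Cons)

lemma key_top: "k - 1 \<le> i \<Longrightarrow> kk i a = []"
  by (simp add: key_def)

lemma key_J: "kk i a \<in> J k T i" by (simp add: J_def)

lemma dif_mono: "i \<le> j \<Longrightarrow> dif j a b \<Longrightarrow> dif i a b"
  unfolding dif_def by (metis key_drop)

lemma dif_top: "dif i a b \<Longrightarrow> i < k - 1"
  unfolding dif_def using key_top by (metis not_less)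

lemma dif_sym: "dif i a b \<longleftrightarrow> dif i b a" by (auto simp: dif_def)
lemma dif_irrefl[simp]: "\<not> dif i a a" by (simp add: dif_def)
lemma dif_ultra: "\<not> dif i a b \<Longrightarrow> \<not> dif i b c \<Longrightarrow> \<not> dif i a c" by (simp add: dif_def)

lemma ord_props: "i \<le> k - 2 \<Longrightarrow> trans (ord i) \<and> irrefl (ord i) \<and> total_on (J k T i) (ord i)"
  using ord_total by (simp add: strict_linear_order_on_def)

lemma lt_step: assumes "ltJ k ord (Suc i) (kk (Suc i) a) (kk (Suc i) b)"
  shows "ltJ k ord i (kk i a) (kk i b)"
proof -
  from assms have i: "Suc i < k - 1" and o: "(kk (Suc i) a, kk (Suc i) b) \<in> ord (Suc i)"
    by (auto simp: ltJ_def)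
  have "pi_J 1 (kk i a) = kk (Suc i) a" "pi_J 1 (kk i b) = kk (Suc i) b"
    using key_drop[of i "Suc i"] by (auto simp: pi_J_def)
  with o ord_compat i key_J show ?thesis
    by (auto simp: ltJ_def)
qed

lemma lt_down: "ltJ k ord j (kk j a) (kk j b) \<Longrightarrow> i \<le> j \<Longrightarrow> ltJ k ord i (kk i a) (kk i b)"
proof (induction j)
  case 0 then show ?case by simp
next
  case (Suc j)
  show ?case
  proof (cases "i = Suc j")
    case True then show ?thesis using Suc by simp
  next
    case False
    then have "i \<le> j" using Suc by simp
    then show ?thesis using Suc lt_step by blast
  qed
qed

lemma prec_irrefl[simp]: "\<not> prec a a"
  using ord_props[of 0] by (auto simp: prec_def ltJ_def irrefl_def)

lemma prec_trans: "prec a b \<Longrightarrow> prec b c \<Longrightarrow> prec a c"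
proof -
  assume h: "prec a b" "prec b c"
  have "trans (ord 0)" using ord_props[of 0] by simp
  then show ?thesis using h unfolding prec_def ltJ_def by (meson transD)
qed

lemma prec_asym: "prec a b \<Longrightarrow> \<not> prec b a"
  using prec_trans prec_irrefl by blast

lemma prec_dif: "prec a b \<Longrightarrow> dif 0 a b"
  unfolding dif_def using prec_irrefl[unfolded prec_def] by (metis prec_def)

lemma prec_key: "kk 0 a = kk 0 a' \<Longrightarrow> kk 0 b = kk 0 b' \<Longrightarrow> prec a b = prec a' b'"
  by (simp add: prec_def)

lemma LT: "ltJ k ord i (kk i a) (kk i b) \<longleftrightarrow> prec a b \<and> dif i a b"
proof
  assume h: "ltJ k ord i (kk i a) (kk i b)"
  then have "prec a b" using lt_down[OF h, of 0] by (simp add: prec_def)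
  moreover have "dif i a b" using h ord_props[of i] by (auto simp: ltJ_def dif_def irrefl_def)
  ultimately show "prec a b \<and> dif i a b" by simp
next
  assume h: "prec a b \<and> dif i a b"
  then have i: "i < k - 1" using dif_top by blast
  have tot: "total_on (J k T i) (ord i)" using ord_props[of i] i by simp
  have "(kk i a, kk i b) \<in> ord i \<or> (kk i b, kk i a) \<in> ord i"
    using tot h key_J unfolding total_on_def dif_def by blast
  moreover have "\<not> (kk i b, kk i a) \<in> ord i"
  proof
    assume "(kk i b, kk i a) \<in> ord i"
    then have "ltJ k ord i (kk i b) (kk i a)" using i by (simp add: ltJ_def)
    then have "prec b a" using lt_down[of i b a 0] by (simp add: prec_def)
    then show False using h prec_asym by blast
  qed
  ultimately show "ltJ k ord i (kk i a) (kk i b)" using i by (simp add: ltJ_def)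
qed

lemma prec_total: "dif 0 a b \<Longrightarrow> prec a b \<or> prec b a"
proof -
  assume "dif 0 a b"
  then have "0 < k - 1" using dif_top by blast
  then have "total_on (J k T 0) (ord 0)" using ord_props[of 0] by simp
  then show ?thesis using \<open>dif 0 a b\<close> key_J unfolding total_on_def dif_def prec_def ltJ_def
    using \<open>0 < k - 1\<close> by blast
qed

lemma prec_cong: "prec a c \<Longrightarrow> dif j a c \<Longrightarrow> \<not> dif j c b \<Longrightarrow> prec a b"
proof -
  assume h: "prec a c" "dif j a c" "\<not> dif j c b"
  then have "ltJ k ord j (kk j a) (kk j c)" using LT by simp
  then have "ltJ k ord j (kk j a) (kk j b)" using h(3) by (simp add: dif_def)
  then show ?thesis using LT by simp
qed

lemma prec_cong2: "prec c a \<Longrightarrow> dif j a c \<Longrightarrow> \<not> dif j c b \<Longrightarrow> prec b a"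
proof -
  assume h: "prec c a" "dif j a c" "\<not> dif j c b"
  then have "ltJ k ord j (kk j c) (kk j a)" using LT dif_sym by blast
  then have "ltJ k ord j (kk j b) (kk j a)" using h(3) by (simp add: dif_def)
  then show ?thesis using LT by simp
qed

definition dd :: "nat \<Rightarrow> 'n \<Rightarrow> complex" where "dd i a = - of_nat i * T i $ a $ a"
definition del :: "nat \<Rightarrow> 'n R" where "del i = Abs (dT T i)"

lemma ent_del: "1 \<le> i \<Longrightarrow> i < k \<Longrightarrow> ent (del i) a b = (if a = b then dd i a else 0)"
proof -
  assume h: "1 \<le> i" "i < k"
  have e: "dT T i $ a $ b = - (complex_of_real (real i) * (T i $ a $ b))"
    unfolding dT_def vector_uminus_component vector_scaleR_component by (simp add: scaleR_conv_of_real)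
  show ?thesis using T_cartan h by (auto simp: del_def ent_def e dd_def is_diag_def)
qed

lemma dd_key: "1 \<le> i \<Longrightarrow> i < k \<Longrightarrow> \<not> dif (i - 1) a b \<Longrightarrow> dd i a = dd i b"
proof -
  assume h: "1 \<le> i" "i < k" "\<not> dif (i - 1) a b"
  have "i - 1 < k - 1" using h by simp
  then have "kk (i - 1) a = T i $ a $ a # kk i a" "kk (i - 1) b = T i $ b $ b # kk i b"
    using key_Cons[of "i - 1"] h by auto
  then show ?thesis using h by (auto simp: dd_def dif_def)
qed

lemma dd_dif: "1 \<le> i \<Longrightarrow> i < k \<Longrightarrow> \<not> dif i a b \<Longrightarrow> dif (i - 1) a b \<Longrightarrow> dd i a \<noteq> dd i b"
proof -
  assume h: "1 \<le> i" "i < k" "\<not> dif i a b" "dif (i - 1) a b"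
  have "i - 1 < k - 1" using h by simp
  then have "kk (i - 1) a = T i $ a $ a # kk i a" "kk (i - 1) b = T i $ b $ b # kk i b"
    using key_Cons[of "i - 1"] h by auto
  then show ?thesis using h by (auto simp: dd_def dif_def)
qed

end

definition Pres :: "(complex^'n::finite) set \<Rightarrow> 'n R \<Rightarrow> bool" where
  "Pres S X \<longleftrightarrow> (\<forall>v\<in>S. rep X *v v \<in> S)"

lemma mv_comp: "(rep X *v v) $ a = (\<Sum>b\<in>UNIV. ent X a b * v $ b)"
  by (simp add: matrix_vector_mult_def ent_def)

context fixes S :: "(complex^'n::finite) set" assumes subS: "vec.subspace S"
begin

lemma Pres_zero: "Pres S 0" using subS by (simp add: Pres_def rep_zero vec.subspace_0)
lemma Pres_one: "Pres S 1" by (simp add: Pres_def rep_one)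
lemma Pres_add: "Pres S X \<Longrightarrow> Pres S Y \<Longrightarrow> Pres S (X + Y)"
  using subS by (simp add: Pres_def rep_add matrix_vector_mult_add_rdistrib vec.subspace_add)
lemma Pres_uminus: "Pres S X \<Longrightarrow> Pres S (- X)"
proof -
  assume "Pres S X"
  moreover have "rep (- X) *v v = - (rep X *v v)" for v
    by (simp add: rep_uminus vec_eq_iff matrix_vector_mult_def sum_negf)
  ultimately show ?thesis using subS by (simp add: Pres_def vec.subspace_neg)
qed
lemma Pres_diff: "Pres S X \<Longrightarrow> Pres S Y \<Longrightarrow> Pres S (X - Y)"
  using Pres_add Pres_uminus by (metis diff_conv_add_uminus)
lemma Pres_mult: "Pres S X \<Longrightarrow> Pres S Y \<Longrightarrow> Pres S (X * Y)"
  by (simp add: Pres_def rep_mult matrix_vector_mul_assoc[symmetric])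
lemma Pres_sum: "(\<And>x. x \<in> A \<Longrightarrow> Pres S (f x)) \<Longrightarrow> Pres S (sum f A)"
  by (induction A rule: infinite_finite_induct) (auto simp: Pres_zero Pres_add)
lemma Pres_scale: "Pres S X \<Longrightarrow> Pres S (had (\<lambda>a b. c) X)"
proof -
  assume "Pres S X"
  moreover have "rep (had (\<lambda>a b. c) X) *v v = c *s (rep X *v v)" for v
    by (simp add: vec_eq_iff mv_comp sum_distrib_left mult.assoc)
  ultimately show ?thesis using subS by (simp add: Pres_def vec.subspace_scale)
qed

lemma Pres_gm: "(\<forall>j\<le>i. Pres S (f j) \<and> Pres S (g j)) \<Longrightarrow> Pres S (gm f g i)"
  unfolding gm_def
proof (rule Pres_sum)
  fix j assume "\<forall>j\<le>i. Pres S (f j) \<and> Pres S (g j)" "j \<in> {..i}"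
  then show "Pres S (f j * g (i - j))" by (intro Pres_mult) auto
qed

lemma Pres_ginv: "(\<forall>j. 1 \<le> j \<and> j \<le> m \<longrightarrow> Pres S (f j)) \<Longrightarrow> Pres S (ginv f m)"
proof (induction m rule: less_induct)
  case (less m)
  show ?case
  proof (cases "m = 0")
    case True then show ?thesis by (simp add: Pres_one)
  next
    case False
    then have "ginv f m = - (\<Sum>j\<in>{1..m}. f j * ginv f (m - j))" by (subst ginv.simps) simp
    moreover have "Pres S (\<Sum>j\<in>{1..m}. f j * ginv f (m - j))"
    proof (rule Pres_sum)
      fix j assume j: "j \<in> {1..m}"
      have "Pres S (f j)" using less.prems j by auto
      moreover have "Pres S (ginv f (m - j))" using less.IH[of "m - j"] less.prems j False by auto
      ultimately show "Pres S (f j * ginv f (m - j))" by (rule Pres_mult)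
    qed
    ultimately show ?thesis by (simp add: Pres_uminus)
  qed
qed

end

context ctx
begin

definition proj :: "nat \<Rightarrow> complex list \<Rightarrow> complex^'n \<Rightarrow> complex^'n" where
  "proj m p v = (\<chi> a. if kk m a = p then v $ a else 0)"

definition graded :: "nat \<Rightarrow> (complex^'n) set \<Rightarrow> bool" where
  "graded m S \<longleftrightarrow> (\<forall>v\<in>S. \<forall>p. proj m p v \<in> S)"

definition keyinv :: "nat \<Rightarrow> ('n \<Rightarrow> 'n \<Rightarrow> complex) \<Rightarrow> bool" where
  "keyinv m w \<longleftrightarrow> (\<forall>a b a' b'. kk m a = kk m a' \<longrightarrow> kk m b = kk m b' \<longrightarrow> w a b = w a' b')"

lemma finJ: "finite (J k T m)" by (simp add: J_def)

lemma mask_vec: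
  assumes w: "keyinv m w"
  defines "W \<equiv> \<lambda>q p. w (SOME a. kk m a = q) (SOME b. kk m b = p)"
  shows "rep (had w X) *v v = (\<Sum>p\<in>J k T m. \<Sum>q\<in>J k T m. W q p *s proj m q (rep X *v proj m p v))"
proof (rule vec_eq_iff[THEN iffD2], rule allI)
  fix a
  have Wk: "W (kk m a) (kk m b) = w a b" for b
  proof -
    have "kk m (SOME a'. kk m a' = kk m a) = kk m a" by (rule someI) simp
    moreover have "kk m (SOME b'. kk m b' = kk m b) = kk m b" by (rule someI) simp
    ultimately show ?thesis using w unfolding W_def keyinv_def by metis
  qed
  have "(\<Sum>p\<in>J k T m. \<Sum>q\<in>J k T m. W q p *s proj m q (rep X *v proj m p v)) $ a
      = (\<Sum>p\<in>J k T m. \<Sum>q\<in>J k T m. if q = kk m a then W q p * (rep X *v proj m p v) $ a else 0)"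
    by (auto simp: proj_def intro!: sum.cong)
  also have "\<dots> = (\<Sum>p\<in>J k T m. W (kk m a) p * (rep X *v proj m p v) $ a)"
    by (simp add: key_J finJ)
  also have "\<dots> = (\<Sum>p\<in>J k T m. \<Sum>b\<in>UNIV. if p = kk m b then W (kk m a) p * ent X a b * v $ b else 0)"
    by (simp add: mv_comp proj_def sum_distrib_left mult.assoc if_distrib eq_commute cong: if_cong)
  also have "\<dots> = (\<Sum>b\<in>UNIV. \<Sum>p\<in>J k T m. if p = kk m b then W (kk m a) p * ent X a b * v $ b else 0)"
    by (rule sum.swap)
  also have "\<dots> = (\<Sum>b\<in>UNIV. W (kk m a) (kk m b) * ent X a b * v $ b)"
    by (simp add: key_J finJ)
  also have "\<dots> = (rep (had w X) *v v) $ a"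
    by (simp add: mv_comp Wk)
  finally show "(rep (had w X) *v v) $ a = (\<Sum>p\<in>J k T m. \<Sum>q\<in>J k T m. W q p *s proj m q (rep X *v proj m p v)) $ a" ..
qed

lemma mask_Pres:
  assumes subS: "vec.subspace S" and g: "graded m S" and X: "Pres S X" and w: "keyinv m w"
  shows "Pres S (had w X)"
  unfolding Pres_def
proof
  fix v assume v: "v \<in> S"
  show "rep (had w X) *v v \<in> S"
    unfolding mask_vec[OF w]
    using subS g X v unfolding graded_def Pres_def
    by (intro vec.subspace_sum vec.subspace_scale) auto
qed

lemma keyinv_mono: "m \<le> m' \<Longrightarrow> keyinv m' w \<Longrightarrow> keyinv m w"
  unfolding keyinv_def by (metis key_drop)

lemma keyinv_dif: "m \<le> i \<Longrightarrow> keyinv m (\<lambda>a b. f (dif i a b))"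
  unfolding keyinv_def dif_def by (metis key_drop)

lemma proj_had: "proj m' q v = rep (had (\<lambda>a b. if kk m' a = q \<and> kk m' b = q then 1 else 0) 1) *v v"
proof (rule vec_eq_iff[THEN iffD2], rule allI)
  fix a
  have "(\<Sum>b\<in>UNIV. (if kk m' a = q \<and> kk m' b = q then 1 else 0) * ent 1 a b * v $ b)
      = (\<Sum>b\<in>UNIV. if b = a then (if kk m' a = q then v $ a else 0) else 0)"
    by (rule sum.cong) (auto simp: ent_one)
  then show "proj m' q v $ a = (rep (had (\<lambda>a b. if kk m' a = q \<and> kk m' b = q then 1 else 0) 1) *v v) $ a"
    by (simp add: mv_comp proj_def)
qed

lemma graded_up: assumes "vec.subspace S" "graded m S" "m \<le> m'" shows "graded m' S"
  unfolding graded_def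
proof (intro ballI allI)
  fix v q assume v: "v \<in> S"
  have "keyinv m' (\<lambda>a b. if kk m' a = q \<and> kk m' b = q then 1 else 0)"
    unfolding keyinv_def by auto
  then have "keyinv m (\<lambda>a b. if kk m' a = q \<and> kk m' b = q then 1::complex else 0)"
    using keyinv_mono assms(3) by blast
  then have "Pres S (had (\<lambda>a b. if kk m' a = q \<and> kk m' b = q then 1 else 0) 1)"
    using mask_Pres assms Pres_one by blast
  then show "proj m' q v \<in> S" using v by (simp add: Pres_def proj_had)
qed

lemma eig_vec:
  assumes subS: "vec.subspace S" and P: "Pres S D" and diag: "\<And>a b. a \<noteq> b \<Longrightarrow> ent D a b = 0" and w: "w \<in> S"
  shows "(\<chi> a. if ent D a a = c then w $ a else 0) \<in> S"
proof -
  have ind: "finite E \<Longrightarrow> (\<chi> a. (\<Prod>e\<in>E. (ent D a a - e)) * w $ a) \<in> S" for E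
  proof (induction E rule: finite_induct)
    case empty then show ?case using w by (simp add: vec_lambda_eta)
  next
    case (insert e E)
    let ?u = "\<chi> a. (\<Prod>e\<in>E. (ent D a a - e)) * w $ a"
    have "Pres S (D - had (\<lambda>a b. e) 1)" using P Pres_diff Pres_scale Pres_one subS by blast
    then have "rep (D - had (\<lambda>a b. e) 1) *v ?u \<in> S" using insert by (simp add: Pres_def)
    moreover have "rep (D - had (\<lambda>a b. e) 1) *v ?u = (\<chi> a. (\<Prod>e\<in>insert e E. (ent D a a - e)) * w $ a)"
    proof -
      have "(\<Sum>b\<in>UNIV. (ent D a b - e * (if a = b then 1 else 0)) * ((\<Prod>e\<in>E. ent D b b - e) * w $ b))
          = (ent D a a - e) * ((\<Prod>e\<in>E. ent D a a - e) * w $ a)" for a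
      proof -
        have "(\<Sum>b\<in>UNIV. (ent D a b - e * (if a = b then 1 else 0)) * ((\<Prod>e\<in>E. ent D b b - e) * w $ b))
            = (\<Sum>b\<in>UNIV. if b = a then (ent D a a - e) * ((\<Prod>e\<in>E. ent D a a - e) * w $ a) else 0)"
          by (rule sum.cong) (auto simp: diag)
        then show ?thesis by simp
      qed
      then show ?thesis using insert by (simp add: vec_eq_iff mv_comp ent_diff ent_one mult.assoc)
    qed
    ultimately show ?case by simp
  qed
  let ?E = "(\<lambda>a. ent D a a) ` UNIV - {c}"
  have fE: "finite ?E" by simp
  have nz: "(\<Prod>e\<in>?E. (c - e)) \<noteq> 0" by (simp add: prod_zero_iff)
  have "inverse (\<Prod>e\<in>?E. (c - e)) *s (\<chi> a. (\<Prod>e\<in>?E. (ent D a a - e)) * w $ a) \<in> S"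
    using ind[OF fE] subS vec.subspace_scale by blast
  moreover have "inverse (\<Prod>e\<in>?E. (c - e)) *s (\<chi> a. (\<Prod>e\<in>?E. (ent D a a - e)) * w $ a)
      = (\<chi> a. if ent D a a = c then w $ a else 0)"
  proof (rule vec_eq_iff[THEN iffD2], rule allI)
    fix a
    show "(inverse (\<Prod>e\<in>?E. (c - e)) *s (\<chi> a. (\<Prod>e\<in>?E. (ent D a a - e)) * w $ a)) $ a
        = (\<chi> a. if ent D a a = c then w $ a else 0) $ a"
    proof (cases "ent D a a = c")
      case True then show ?thesis using nz by simp
    next
      case False
      then have "ent D a a \<in> ?E" by simp
      then have "(\<Prod>e\<in>?E. (ent D a a - e)) = 0" using prod_zero[OF fE, of "\<lambda>e. ent D a a - e"] by auto
      then show ?thesis using False by simp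
    qed
  qed
  ultimately show ?thesis by simp
qed

lemma graded_down:
  assumes subS: "vec.subspace S" and g: "graded m S" and m: "1 \<le> m" "m < k" and P: "Pres S (del m)"
  shows "graded (m - 1) S"
  unfolding graded_def
proof (intro ballI allI)
  fix v p assume v: "v \<in> S"
  have km: "kk (m - Suc 0) a = T m $ a $ a # kk m a" for a using key_Cons[of "m - 1" a] m by simp
  show "proj (m - 1) p v \<in> S"
  proof (cases p)
    case Nil
    then have "proj (m - 1) p v = 0" by (simp add: proj_def km vec_eq_iff)
    then show ?thesis using subS vec.subspace_0 by simp
  next
    case (Cons c p')
    have pv: "proj m p' v \<in> S" using g v by (simp add: graded_def)
    have "(\<chi> a. if ent (del m) a a = - of_nat m * c then proj m p' v $ a else 0) \<in> S"
      by (rule eig_vec[OF subS P _ pv]) (simp add: ent_del[OF m])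
    moreover have "(\<chi> a. if ent (del m) a a = - of_nat m * c then proj m p' v $ a else 0) = proj (m - 1) p v"
      using m by (auto simp: vec_eq_iff proj_def km Cons ent_del dd_def)
    ultimately show ?thesis by simp
  qed
qed

end

lemma ginv_gm: assumes f: "f 0 = 1" and h: "h 0 = 1"
  shows "ginv (gm f h) i = gm (ginv h) (ginv f) i"
proof -
  let ?F = "Abs_fps f" and ?H = "Abs_fps h" and ?Fi = "Abs_fps (ginv f)" and ?Hi = "Abs_fps (ginv h)"
  let ?X = "Abs_fps (ginv (gm f h))"
  have u: "Abs_fps unit = (1::'a fps)" by (simp add: fps_eq_iff unit_def)
  have gmf: "Abs_fps (gm a b) = Abs_fps a * Abs_fps b" for a b :: "nat \<Rightarrow> 'a" by (simp add: fps_eq_iff gm_fps)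
  have fh0: "gm f h 0 = 1" using f h by (simp add: gm_def)
  have e1: "gm (gm f h) (ginv (gm f h)) = unit" by (rule ext) (rule gm_ginv_right[of "gm f h", OF fh0])
  have e2: "gm (ginv f) f = unit" by (rule ext) (rule gm_ginv_left[of f, OF f])
  have e3: "gm (ginv h) h = unit" by (rule ext) (rule gm_ginv_left[of h, OF h])
  have X: "(?F * ?H) * ?X = 1" by (simp add: gmf[symmetric] e1 u)
  have Fl: "?Fi * ?F = 1" by (simp add: gmf[symmetric] e2 u)
  have Hl: "?Hi * ?H = 1" by (simp add: gmf[symmetric] e3 u)
  have L: "(?Hi * ?Fi) * (?F * ?H) = 1"
    by (simp add: mult.assoc) (metis Fl Hl mult.assoc mult_1)
  have "?X = ((?Hi * ?Fi) * (?F * ?H)) * ?X" using L by simp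
  also have "\<dots> = (?Hi * ?Fi) * ((?F * ?H) * ?X)" by (simp only: mult.assoc)
  also have "\<dots> = ?Hi * ?Fi" using X by simp
  finally have "Abs_fps (ginv (gm f h)) = Abs_fps (gm (ginv h) (ginv f))" by (simp add: gmf)
  then have "fps_nth (Abs_fps (ginv (gm f h))) i = fps_nth (Abs_fps (gm (ginv h) (ginv f))) i" by (rule arg_cong)
  then show ?thesis by simp
qed

lemma rm_split: "i < K \<Longrightarrow> rm K x g i = x i * g 0 + (\<Sum>j\<in>{1..<K}. if i + j < K then x (i + j) * g j else 0)"
proof -
  assume "i < K"
  have "{..<K} = insert 0 {1..<K}" using \<open>i < K\<close> by auto
  then show ?thesis using \<open>i < K\<close> by (simp add: rm_def)
qed
lemma lm_split: "i < K \<Longrightarrow> lm K g x i = g 0 * x i + (\<Sum>j\<in>{1..<K}. if i + j < K then g j * x (i + j) else 0)"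
proof -
  assume "i < K"
  have "{..<K} = insert 0 {1..<K}" using \<open>i < K\<close> by auto
  then show ?thesis using \<open>i < K\<close> by (simp add: lm_def)
qed

lemma Pres_lm: "vec.subspace S \<Longrightarrow> (\<forall>j<K. Pres S (g j)) \<Longrightarrow> (\<forall>j. i \<le> j \<longrightarrow> j < K \<longrightarrow> Pres S (x j)) \<Longrightarrow> Pres S (lm K g x i)"
  unfolding lm_def by (intro Pres_sum) (auto intro: Pres_mult Pres_zero)
lemma Pres_rm: "vec.subspace S \<Longrightarrow> (\<forall>j<K. Pres S (g j)) \<Longrightarrow> (\<forall>j. i \<le> j \<longrightarrow> j < K \<longrightarrow> Pres S (x j)) \<Longrightarrow> Pres S (rm K x g i)"
  unfolding rm_def by (intro Pres_sum) (auto intro: Pres_mult Pres_zero)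

context ctx
begin

lemma prec_cong3: "prec a c \<Longrightarrow> dif i a c \<Longrightarrow> \<not> dif i a b \<Longrightarrow> prec b c"
proof -
  assume h: "prec a c" "dif i a c" "\<not> dif i a b"
  then have "ltJ k ord i (kk i a) (kk i c)" using LT by simp
  then have "ltJ k ord i (kk i b) (kk i c)" using h(3) by (simp add: dif_def)
  then show ?thesis using LT by simp
qed

definition U :: "nat \<Rightarrow> 'n R \<Rightarrow> bool" where
  "U i X \<longleftrightarrow> (\<forall>a b. ent X a b \<noteq> 0 \<longrightarrow> prec a b \<and> dif i a b)"

lemma U_zero: "U i 0" by (simp add: U_def ent_zero)
lemma U_add: assumes "U i X" "U i Y" shows "U i (X + Y)"
  unfolding U_def
proof (intro allI impI)
  fix a b assume "ent (X + Y) a b \<noteq> 0"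
  then have "ent X a b \<noteq> 0 \<or> ent Y a b \<noteq> 0" by (auto simp: ent_add)
  then show "prec a b \<and> dif i a b" using assms by (auto simp: U_def)
qed
lemma U_uminus: "U i X \<Longrightarrow> U i (- X)" by (auto simp: U_def ent_uminus)
lemma U_diff: "U i X \<Longrightarrow> U i Y \<Longrightarrow> U i (X - Y)"
  using U_add U_uminus by (metis diff_conv_add_uminus)
lemma U_sum: "(\<And>x. x \<in> A \<Longrightarrow> U i (f x)) \<Longrightarrow> U i (sum f A)"
  by (induction A rule: infinite_finite_induct) (auto simp: U_zero U_add)

lemma Pres_del: assumes "vec.subspace S" "graded m S" "m \<le> i - 1" "1 \<le> i" "i < k"
  shows "Pres S (del i)"
proof -
  have e: "del i = had (\<lambda>a b. if dif m a b then 0 else dd i a) 1"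
    by (rule R_eqI) (auto simp: ent_del[OF assms(4,5)] ent_one)
  have "keyinv m (\<lambda>a b. if dif m a b then 0 else dd i a)"
    unfolding keyinv_def
  proof (intro allI impI)
    fix a b a' b' assume h: "kk m a = kk m a'" "kk m b = kk m b'"
    have "dd i a = dd i a'" using dd_key[OF assms(4,5)] h(1) assms(3) dif_mono dif_def by metis
    then show "(if dif m a b then 0 else dd i a) = (if dif m a' b' then 0 else dd i a')"
      using h by (simp add: dif_def)
  qed
  then show ?thesis unfolding e using mask_Pres[OF assms(1,2) Pres_one[OF assms(1)]] by blast
qed

end

locale ctx2 = ctx k T ord for k :: nat and T :: "nat \<Rightarrow> complex^'n::finite^'n" and ord +
  fixes bm bp :: "nat \<Rightarrow> 'n R"
  assumes bm0: "bm 0 = 1" and bp0: "bp 0 = 1"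
    and bm_u: "\<And>i a b. 1 \<le> i \<Longrightarrow> i < k \<Longrightarrow> ent (bm i) a b \<noteq> 0 \<Longrightarrow> prec b a \<and> dif i a b"
    and bp_p: "\<And>i a b. 1 \<le> i \<Longrightarrow> i < k \<Longrightarrow> ent (bp i) a b \<noteq> 0 \<Longrightarrow> \<not> dif i a b \<or> prec a b"
begin

definition gam :: "nat \<Rightarrow> 'n R" where "gam = rm k (lm k bp del) (ginv bp)"
definition NN :: "nat \<Rightarrow> 'n R" where "NN i = gam i - del i"

lemma gam_eq: "i < k \<Longrightarrow> rm k gam bp i = lm k bp del i"
proof -
  assume i: "i < k"
  have "rm k gam bp i = rm k (lm k bp del) (gm (ginv bp) bp) i" unfolding gam_def by (rule rm_rm)
  also have "\<dots> = rm k (lm k bp del) unit i"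
    by (rule rm_cong) (auto simp: gm_ginv_left bp0)
  also have "\<dots> = lm k bp del i" using i by (rule rm_unit)
  finally show ?thesis .
qed

lemma comm_term: assumes "1 \<le> j" "j < k" "1 \<le> i" "i + j < k"
  shows "U i (bp j * del (i + j) - del (i + j) * bp j)"
  unfolding U_def
proof (intro allI impI)
  fix a b assume nz: "ent (bp j * del (i + j) - del (i + j) * bp j) a b \<noteq> 0"
  have ij: "1 \<le> i + j" "i + j < k" using assms by auto
  have e: "ent (bp j * del (i + j) - del (i + j) * bp j) a b = ent (bp j) a b * (dd (i + j) b - dd (i + j) a)"
  proof -
    have "ent (bp j * del (i + j)) a b = ent (bp j) a b * dd (i + j) b"
    proof -
      have "ent (bp j * del (i + j)) a b = (\<Sum>c\<in>UNIV. if c = b then ent (bp j) a b * dd (i + j) b else 0)"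
        unfolding ent_mult by (rule sum.cong) (auto simp: ent_del[OF ij])
      then show ?thesis by simp
    qed
    moreover have "ent (del (i + j) * bp j) a b = dd (i + j) a * ent (bp j) a b"
    proof -
      have "ent (del (i + j) * bp j) a b = (\<Sum>c\<in>UNIV. if c = a then dd (i + j) a * ent (bp j) a b else 0)"
        unfolding ent_mult by (rule sum.cong) (auto simp: ent_del[OF ij])
      then show ?thesis by simp
    qed
    ultimately show ?thesis by (simp add: ent_diff algebra_simps)
  qed
  from nz e have b: "ent (bp j) a b \<noteq> 0" and d: "dd (i + j) a \<noteq> dd (i + j) b" by auto
  have "dif (i + j - 1) a b" using d dd_key[of "i + j" a b] assms by auto
  then have "dif i a b" "dif j a b" using dif_mono[of i "i + j - 1" a b] dif_mono[of j "i + j - 1" a b] assms by auto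
  moreover have "prec a b" using bp_p[OF assms(1,2) b] \<open>dif j a b\<close> by simp
  ultimately show "prec a b \<and> dif i a b" by simp
qed

lemma N_term: assumes "1 \<le> j" "j < k" "U (i + j) X"
  shows "U i (X * bp j)"
  unfolding U_def
proof (intro allI impI)
  fix a b assume "ent (X * bp j) a b \<noteq> 0"
  then obtain c where c1: "ent X a c \<noteq> 0" and c2: "ent (bp j) c b \<noteq> 0"
    unfolding ent_mult by (metis (mono_tags, lifting) mult_not_zero sum.neutral)
  from c1 assms(3) have ac: "prec a c" "dif (i + j) a c" by (auto simp: U_def)
  have aci: "dif i a c" using dif_mono[of i "i + j" a c] ac(2) by simp
  have acj: "dif j a c" using dif_mono[of j "i + j" a c] ac(2) by simp
  from bp_p[OF assms(1,2) c2] show "prec a b \<and> dif i a b"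
  proof
    assume cb: "\<not> dif j c b"
    have "prec a b" using prec_cong[OF ac(1) acj cb] .
    moreover have "dif i a b"
    proof (cases "i \<le> j")
      case True
      then have "dif j a b" using acj cb dif_ultra[of j a b c] dif_sym by blast
      then show ?thesis using True dif_mono by blast
    next
      case False
      then have "\<not> dif i c b" using cb dif_mono[of j i c b] by auto
      then show ?thesis using aci dif_ultra[of i a b c] dif_sym by blast
    qed
    ultimately show ?thesis by simp
  next
    assume cb: "prec c b"
    have "prec a b" using prec_trans ac(1) cb by blast
    moreover have "dif i a b"
    proof (rule ccontr)
      assume "\<not> dif i a b"
      then have "prec b c" using prec_cong3[OF ac(1) aci] by blast
      then show False using cb prec_asym by blast
    qed
    ultimately show ?thesis by simp
  qed
qed

lemma NN_U: "1 \<le> i \<Longrightarrow> i < k \<Longrightarrow> U i (NN i)"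
proof (induction "k - i" arbitrary: i rule: less_induct)
  case less
  have r: "gam i + (\<Sum>j\<in>{1..<k}. if i + j < k then gam (i + j) * bp j else 0)
        = del i + (\<Sum>j\<in>{1..<k}. if i + j < k then bp j * del (i + j) else 0)"
    using gam_eq[OF less.prems(2)] rm_split[OF less.prems(2), of gam bp] lm_split[OF less.prems(2), of bp del]
    by (simp add: bp0)
  have "NN i = (\<Sum>j\<in>{1..<k}. if i + j < k then (bp j * del (i + j) - del (i + j) * bp j) - NN (i + j) * bp j else 0)"
  proof -
    have "NN i = (\<Sum>j\<in>{1..<k}. if i + j < k then bp j * del (i + j) else 0) - (\<Sum>j\<in>{1..<k}. if i + j < k then gam (i + j) * bp j else 0)"
      unfolding NN_def using r by (simp add: algebra_simps)
    also have "\<dots> = (\<Sum>j\<in>{1..<k}. (if i + j < k then bp j * del (i + j) else 0) - (if i + j < k then gam (i + j) * bp j else 0))"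
      by (simp add: sum_subtractf)
    also have "\<dots> = (\<Sum>j\<in>{1..<k}. if i + j < k then (bp j * del (i + j) - del (i + j) * bp j) - NN (i + j) * bp j else 0)"
      by (rule sum.cong) (auto simp: NN_def algebra_simps)
    finally show ?thesis .
  qed
  also have "U i \<dots>"
  proof (rule U_sum)
    fix j assume j: "j \<in> {1..<k}"
    show "U i (if i + j < k then (bp j * del (i + j) - del (i + j) * bp j) - NN (i + j) * bp j else 0)"
    proof (cases "i + j < k")
      case True
      have "U (i + j) (NN (i + j))" using less.hyps[of "i + j"] True j less.prems by auto
      then have "U i (NN (i + j) * bp j)" using N_term j by auto
      moreover have "U i (bp j * del (i + j) - del (i + j) * bp j)" using comm_term j True less.prems by auto
      ultimately show ?thesis using True by (simp add: U_diff)
    qed (simp add: U_zero)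
  qed
  finally show ?case .
qed

end

lemma alg_sum: "P 0 \<Longrightarrow> (\<And>x y. P x \<Longrightarrow> P y \<Longrightarrow> P (x + y)) \<Longrightarrow> (\<And>x. x \<in> A \<Longrightarrow> P (f x)) \<Longrightarrow> P (sum f A)"
  by (induction A rule: infinite_finite_induct) auto

locale subalg =
  fixes P :: "'a::ring_1 \<Rightarrow> bool"
  assumes P0: "P 0" and P1: "P 1" and Padd: "P x \<Longrightarrow> P y \<Longrightarrow> P (x + y)"
    and Pneg: "P x \<Longrightarrow> P (- x)" and Pmul: "P x \<Longrightarrow> P y \<Longrightarrow> P (x * y)"
begin
lemma Psum: "(\<And>x. x \<in> A \<Longrightarrow> P (f x)) \<Longrightarrow> P (sum f A)" using alg_sum[of P] P0 Padd by blast
lemma Pdiff: "P x \<Longrightarrow> P y \<Longrightarrow> P (x - y)" by (metis Padd Pneg diff_conv_add_uminus)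
lemma Pgm: "(\<And>j. j \<le> i \<Longrightarrow> P (f j) \<and> P (g j)) \<Longrightarrow> P (gm f g i)"
  unfolding gm_def by (intro Psum Pmul) auto
lemma Pginv: "(\<And>j. 1 \<le> j \<Longrightarrow> j \<le> m \<Longrightarrow> P (f j)) \<Longrightarrow> P (ginv f m)"
proof (induction m rule: less_induct)
  case (less m)
  show ?case
  proof (cases "m = 0")
    case True then show ?thesis by (simp add: P1)
  next
    case False
    then have "ginv f m = - (\<Sum>j\<in>{1..m}. f j * ginv f (m - j))" by (subst ginv.simps) simp
    moreover have "P (\<Sum>j\<in>{1..m}. f j * ginv f (m - j))"
    proof (rule Psum)
      fix j assume j: "j \<in> {1..m}"
      have "P (f j)" using less.prems j by auto
      moreover have "P (ginv f (m - j))" using less.IH[of "m - j"] less.prems j False by auto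
      ultimately show "P (f j * ginv f (m - j))" by (rule Pmul)
    qed
    ultimately show ?thesis by (simp add: Pneg)
  qed
qed
lemma Plm: "(\<And>j. j < K \<Longrightarrow> P (g j)) \<Longrightarrow> (\<And>j. i \<le> j \<Longrightarrow> j < K \<Longrightarrow> P (x j)) \<Longrightarrow> P (lm K g x i)"
  unfolding lm_def by (intro Psum) (auto intro: Pmul P0)
lemma Prm: "(\<And>j. j < K \<Longrightarrow> P (g j)) \<Longrightarrow> (\<And>j. i \<le> j \<Longrightarrow> j < K \<Longrightarrow> P (x j)) \<Longrightarrow> P (rm K x g i)"
  unfolding rm_def by (intro Psum) (auto intro: Pmul P0)
end

lemma lm_add: "lm K g (\<lambda>i. x i + y i) i = lm K g x i + lm K g y i"
  by (simp add: lm_def sum.distrib[symmetric] distrib_left if_distrib cong: if_cong)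
lemma rm_add: "rm K (\<lambda>i. x i + y i) g i = rm K x g i + rm K y g i"
  by (simp add: rm_def sum.distrib[symmetric] distrib_right if_distrib cong: if_cong)

lemma conj_central:
  assumes comm: "\<And>i j. z i * x j = x j * z i" and inv: "\<And>i. gm x y i = unit i" and i: "i < K"
  shows "rm K (lm K x z) y i = z i"
proof -
  have "lm K x z j = rm K z x j" for j unfolding lm_def rm_def by (rule sum.cong) (use comm in auto)
  then have "rm K (lm K x z) y i = rm K (rm K z x) y i" by (intro rm_cong) auto
  also have "\<dots> = rm K z (gm x y) i" by (rule rm_rm)
  also have "\<dots> = rm K z unit i" by (intro rm_cong) (auto simp: inv)
  also have "\<dots> = z i" using i by (rule rm_unit)
  finally show ?thesis .
qed

lemma conj_single:
  assumes "x 0 = 1" "y 0 = 1" "m \<le> i" "i < K"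
  shows "rm K (lm K x (\<lambda>j. if j = m then E else 0)) y i = (if i = m then E else 0)"
proof -
  have l: "lm K x (\<lambda>j. if j = m then E else 0) j = (if j = m then E else 0)" if "m \<le> j" "j < K" for j
  proof -
    have "lm K x (\<lambda>j. if j = m then E else 0) j = (\<Sum>l<K. if l = 0 then (if j = m then E else 0) else 0)"
      unfolding lm_def by (rule sum.cong) (use that assms in auto)
    then show ?thesis using that by simp
  qed
  have "rm K (lm K x (\<lambda>j. if j = m then E else 0)) y i = (\<Sum>l<K. if l = 0 then (if i = m then E else 0) else 0)"
    unfolding rm_def by (rule sum.cong) (use l assms in auto)
  then show ?thesis using assms by simp
qed

lemma conj_zero:
  assumes "\<And>j. i \<le> j \<Longrightarrow> j < K \<Longrightarrow> z j = 0"
  shows "rm K (lm K x z) y i = 0"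
proof -
  have "lm K x z j = 0" if "i \<le> j" for j
    unfolding lm_def by (rule sum.neutral) (use assms that in auto)
  then show ?thesis unfolding rm_def by (intro sum.neutral) auto
qed

context ctx2
begin

definition L :: "nat \<Rightarrow> 'n R \<Rightarrow> 'n R" where "L m X = had (\<lambda>a b. if dif m a b then 0 else 1) X"
definition isL :: "nat \<Rightarrow> 'n R \<Rightarrow> bool" where "isL m X \<longleftrightarrow> (\<forall>a b. dif m a b \<longrightarrow> ent X a b = 0)"
definition isLow :: "'n R \<Rightarrow> bool" where "isLow X \<longleftrightarrow> (\<forall>a b. prec a b \<longrightarrow> ent X a b = 0)"

lemma ent_L: "ent (L m X) a b = (if dif m a b then 0 else ent X a b)" by (simp add: L_def)

lemma isL_subalg: "subalg (isL m)"
proof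
  show "isL m 0" by (simp add: isL_def ent_zero)
  show "isL m 1" by (simp add: isL_def ent_one)
  fix x y :: "'n R"
  show "isL m x \<Longrightarrow> isL m y \<Longrightarrow> isL m (x + y)" by (simp add: isL_def ent_add)
  show "isL m x \<Longrightarrow> isL m (- x)" by (simp add: isL_def ent_uminus)
  show "isL m x \<Longrightarrow> isL m y \<Longrightarrow> isL m (x * y)"
    unfolding isL_def ent_mult
  proof (intro allI impI)
    fix a b assume h: "\<forall>a b. dif m a b \<longrightarrow> ent x a b = 0" "\<forall>a b. dif m a b \<longrightarrow> ent y a b = 0" "dif m a b"
    show "(\<Sum>c\<in>UNIV. ent x a c * ent y c b) = 0"
    proof (rule sum.neutral, rule ballI)
      fix c show "ent x a c * ent y c b = 0" using h dif_ultra by (metis mult_eq_0_iff)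
    qed
  qed
qed

interpretation isLm: subalg "isL m" for m by (rule isL_subalg)

lemma isLow_subalg: "subalg isLow"
proof
  show "isLow 0" by (simp add: isLow_def ent_zero)
  show "isLow 1" by (auto simp: isLow_def ent_one)
  fix x y :: "'n R"
  show "isLow x \<Longrightarrow> isLow y \<Longrightarrow> isLow (x + y)" by (simp add: isLow_def ent_add)
  show "isLow x \<Longrightarrow> isLow (- x)" by (simp add: isLow_def ent_uminus)
  show "isLow x \<Longrightarrow> isLow y \<Longrightarrow> isLow (x * y)"
    unfolding isLow_def ent_mult
  proof (intro allI impI)
    fix a b assume h: "\<forall>a b. prec a b \<longrightarrow> ent x a b = 0" "\<forall>a b. prec a b \<longrightarrow> ent y a b = 0" "prec a b"
    show "(\<Sum>c\<in>UNIV. ent x a c * ent y c b) = 0"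
    proof (rule sum.neutral, rule ballI)
      fix c
      have "prec a c \<or> prec c b"
      proof (cases "dif 0 a c")
        case True
        show ?thesis
        proof (cases "dif 0 c b")
          case True
          have "prec c a \<or> prec a c" using prec_total \<open>dif 0 a c\<close> by blast
          moreover have "prec b c \<or> prec c b" using prec_total True by blast
          ultimately show ?thesis using h(3) prec_trans prec_asym by blast
        next
          case False
          then have "kk 0 c = kk 0 b" by (simp add: dif_def)
          then show ?thesis using h(3) prec_key[of a a c b] by simp
        qed
      next
        case False
        then have "kk 0 a = kk 0 c" by (simp add: dif_def)
        then show ?thesis using h(3) prec_key[of c a b b] by simp
      qed
      then show "ent x a c * ent y c b = 0" using h by auto
    qed
  qed
qed

interpretation isLw: subalg isLow by (rule isLow_subalg)

lemma isL_L: "isL m (L m X)" by (simp add: isL_def ent_L)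
lemma L_id: "isL m X \<Longrightarrow> L m X = X" by (rule R_eqI) (simp add: isL_def ent_L)
lemma isL_mono: "m' \<le> m \<Longrightarrow> isL m' X \<Longrightarrow> isL m X" unfolding isL_def using dif_mono by blast
lemma L_L: "m' \<le> m \<Longrightarrow> L m (L m' X) = L m' X" by (rule R_eqI) (auto simp: ent_L dest: dif_mono)
lemma L_L2: "m' \<le> m \<Longrightarrow> L m' (L m X) = L m' X" by (rule R_eqI) (auto simp: ent_L dest: dif_mono)
lemma L_add: "L m (X + Y) = L m X + L m Y" by (rule R_eqI) (simp add: ent_L ent_add)
lemma L_diff: "L m (X - Y) = L m X - L m Y" by (rule R_eqI) (simp add: ent_L ent_diff)
lemma L_uminus: "L m (- X) = - L m X" by (rule R_eqI) (simp add: ent_L ent_uminus)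
lemma L_zero: "L m 0 = 0" by (rule R_eqI) (simp add: ent_L ent_zero)
lemma L_sum: "L m (sum f A) = (\<Sum>x\<in>A. L m (f x))"
  by (induction A rule: infinite_finite_induct) (auto simp: L_zero L_add)
lemma L_one: "L m 1 = 1" by (rule R_eqI) (auto simp: ent_L ent_one)
lemma L_mult_left: assumes "isL m X" shows "L m (X * Y) = X * L m Y"
proof (rule R_eqI)
  fix a b
  show "ent (L m (X * Y)) a b = ent (X * L m Y) a b"
  proof (cases "dif m a b")
    case True
    then show ?thesis using assms unfolding ent_L ent_mult isL_def
      by (auto intro!: sum.neutral) (metis dif_ultra)
  next
    case False
    then show ?thesis using assms unfolding ent_L ent_mult isL_def
      by (auto intro!: sum.cong) (metis dif_ultra dif_sym)
  qed
qed
lemma L_mult_right: assumes "isL m Y" shows "L m (X * Y) = L m X * Y"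
proof (rule R_eqI)
  fix a b
  show "ent (L m (X * Y)) a b = ent (L m X * Y) a b"
  proof (cases "dif m a b")
    case True
    then show ?thesis using assms unfolding ent_L ent_mult isL_def
      by (auto intro!: sum.neutral) (metis dif_ultra dif_sym)
  next
    case False
    then show ?thesis using assms unfolding ent_L ent_mult isL_def
      by (auto intro!: sum.cong) (metis dif_ultra dif_sym)
  qed
qed
lemma isLow_L: "isLow X \<Longrightarrow> isLow (L m X)" by (simp add: isLow_def ent_L)

lemma L_lm: assumes "\<And>j. isL l (x j)" shows "L l (lm K x \<psi> i) = lm K x (\<lambda>i. L l (\<psi> i)) i"
  unfolding lm_def L_sum by (rule sum.cong) (simp_all add: L_mult_left[OF assms] L_zero)
lemma L_rm: assumes "\<And>j. isL l (y j)" shows "L l (rm K \<phi> y i) = rm K (\<lambda>i. L l (\<phi> i)) y i"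
  unfolding rm_def L_sum by (rule sum.cong) (simp_all add: L_mult_right[OF assms] L_zero)
lemma L_conj: assumes "\<And>j. isL l (x j)" "\<And>j. isL l (y j)"
  shows "L l (rm K (lm K x \<psi>) y i) = rm K (lm K x (\<lambda>i. L l (\<psi> i))) y i"
  unfolding L_rm[OF assms(2)] by (rule rm_cong) (auto simp: L_lm[OF assms(1)])

lemma central_del: "1 \<le> i \<Longrightarrow> i < k \<Longrightarrow> m \<le> i - 1 \<Longrightarrow> isL m X \<Longrightarrow> del i * X = X * del i"
proof -
  assume h: "1 \<le> i" "i < k" "m \<le> i - 1" "isL m X"
  show ?thesis
  proof (rule R_eqI)
    fix a b
    have l: "ent (del i * X) a b = dd i a * ent X a b"
    proof -
      have "ent (del i * X) a b = (\<Sum>c\<in>UNIV. if c = a then dd i a * ent X a b else 0)"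
        unfolding ent_mult by (rule sum.cong) (auto simp: ent_del[OF h(1,2)])
      then show ?thesis by simp
    qed
    have r: "ent (X * del i) a b = ent X a b * dd i b"
    proof -
      have "ent (X * del i) a b = (\<Sum>c\<in>UNIV. if c = b then ent X a b * dd i b else 0)"
        unfolding ent_mult by (rule sum.cong) (auto simp: ent_del[OF h(1,2)])
      then show ?thesis by simp
    qed
    show "ent (del i * X) a b = ent (X * del i) a b"
    proof (cases "dif m a b")
      case True then show ?thesis using h(4) l r by (simp add: isL_def)
    next
      case False
      then have "\<not> dif (i - 1) a b" using dif_mono h(3) by blast
      then show ?thesis using dd_key[OF h(1,2)] l r by simp
    qed
  qed
qed

lemma isL_del: "1 \<le> i \<Longrightarrow> i < k \<Longrightarrow> isL m (del i)"
  by (auto simp: isL_def ent_del)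

end

context ctx2
begin

interpretation isLm: subalg "isL m" for m by (rule isL_subalg)
interpretation isLw: subalg isLow by (rule isLow_subalg)

definition xs :: "nat \<Rightarrow> nat \<Rightarrow> 'n R" where "xs m j = L m (bm j)"
definition psi :: "nat \<Rightarrow> nat \<Rightarrow> 'n R" where "psi m i = L m (gam i)"
definition rho :: "nat \<Rightarrow> nat \<Rightarrow> 'n R" where "rho m = rm k (lm k (xs m) (psi m)) (ginv (xs m))"
definition gg :: "nat \<Rightarrow> nat \<Rightarrow> 'n R" where "gg m = gm (xs m) (ginv (xs (m - 1)))"
definition sig :: "nat \<Rightarrow> nat \<Rightarrow> 'n R" where "sig m = rm k (lm k (xs (m - 1)) (psi m)) (ginv (xs (m - 1)))"
definition Mm :: "nat \<Rightarrow> 'n \<Rightarrow> 'n \<Rightarrow> bool" where "Mm m a b \<longleftrightarrow> prec b a \<and> dif (m - 1) a b \<and> \<not> dif m a b"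

lemma xs0[simp]: "xs m 0 = 1" by (simp add: xs_def bm0 L_one)
lemma isL_xs: "isL m (xs m j)" by (simp add: xs_def isL_L)
lemma isL_ginv_xs: "isL m (ginv (xs m) j)" by (rule isLm.Pginv) (simp add: isL_xs)
lemma isLow_bm: "j < k \<Longrightarrow> isLow (bm j)"
proof -
  assume j: "j < k"
  show ?thesis
  proof (cases "j = 0")
    case True then show ?thesis by (simp add: bm0 isLw.P1)
  next
    case False
    then show ?thesis using bm_u[of j] j prec_asym unfolding isLow_def by (metis One_nat_def Suc_leI neq0_conv)
  qed
qed
lemma isLow_xs: "j < k \<Longrightarrow> isLow (xs m j)" by (simp add: xs_def isLow_L isLow_bm)
lemma isLow_ginv_xs: "j < k \<Longrightarrow> isLow (ginv (xs m) j)" by (rule isLw.Pginv) (simp add: isLow_xs)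

lemma gam_split: "gam i = del i + NN i" by (simp add: NN_def)

lemma psi_top: "m \<le> i \<Longrightarrow> 1 \<le> i \<Longrightarrow> i < k \<Longrightarrow> psi m i = del i"
proof -
  assume h: "m \<le> i" "1 \<le> i" "i < k"
  have "L m (NN i) = 0"
  proof (rule R_eqI)
    fix a b
    have "ent (NN i) a b \<noteq> 0 \<Longrightarrow> dif m a b"
      using NN_U[OF h(2,3)] h(1) dif_mono[of m i a b] by (auto simp: U_def)
    then show "ent (L m (NN i)) a b = ent 0 a b"
      by (auto simp: ent_L ent_zero)
  qed
  then show ?thesis using L_id[OF isL_del[OF h(2,3)]] by (simp add: psi_def gam_split L_add)
qed

lemma conj_top:
  assumes m: "1 \<le> m" "m \<le> i" "i < k" and xL: "\<And>j. isL m (x j)" and x0: "x 0 = 1"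
  shows "rm k (lm k x (psi m)) (ginv x) i = del i"
proof -
  define mid where "mid = (\<lambda>j. if j = m then del m else (0::'n R))"
  define hi where "hi = (\<lambda>j. if m < j \<and> j < k then del j else (0::'n R))"
  have ps: "psi m j = mid j + hi j" if "i \<le> j" "j < k" for j
  proof -
    have "j = m \<or> m < j" using that m by auto
    then show ?thesis using that m psi_top[of m j] by (auto simp: mid_def hi_def)
  qed
  have "rm k (lm k x (psi m)) (ginv x) i = rm k (lm k x (\<lambda>j. mid j + hi j)) (ginv x) i"
    by (rule rm_cong) (auto intro!: lm_cong simp: ps)
  also have "\<dots> = rm k (lm k x mid) (ginv x) i + rm k (lm k x hi) (ginv x) i"
  proof -
    have "rm k (lm k x (\<lambda>j. mid j + hi j)) (ginv x) i = rm k (\<lambda>j. lm k x mid j + lm k x hi j) (ginv x) i"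
      by (rule rm_cong) (auto simp: lm_add)
    then show ?thesis by (simp add: rm_add)
  qed
  also have "rm k (lm k x mid) (ginv x) i = (if i = m then del m else 0)"
    unfolding mid_def using m x0 by (intro conj_single) auto
  also have "rm k (lm k x hi) (ginv x) i = hi i"
  proof (rule conj_central)
    fix i' j
    show "hi i' * x j = x j * hi i'"
      using central_del[of i' m "x j"] xL by (auto simp: hi_def)
  next
    fix i' show "gm x (ginv x) i' = unit i'" using gm_ginv_right x0 by blast
  qed (use m in simp)
  finally show ?thesis using m by (auto simp: hi_def)
qed

lemma rho_top: "1 \<le> m \<Longrightarrow> m \<le> i \<Longrightarrow> i < k \<Longrightarrow> rho m i = del i"
  unfolding rho_def by (rule conj_top) (auto simp: isL_xs)

lemma sig_top: "1 \<le> m \<Longrightarrow> m \<le> i \<Longrightarrow> i < k \<Longrightarrow> sig m i = del i"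
  unfolding sig_def by (rule conj_top) (auto intro: isL_mono[OF _ isL_xs])

definition NM :: "nat \<Rightarrow> 'n R \<Rightarrow> bool" where "NM m X \<longleftrightarrow> (\<forall>a b. Mm m a b \<longrightarrow> ent X a b = 0)"

lemma NM_zero: "NM m 0" by (simp add: NM_def ent_zero)
lemma NM_add: "NM m X \<Longrightarrow> NM m Y \<Longrightarrow> NM m (X + Y)" by (simp add: NM_def ent_add)
lemma NM_sum: "(\<And>x. x \<in> A \<Longrightarrow> NM m (f x)) \<Longrightarrow> NM m (sum f A)"
  using alg_sum[of "NM m"] NM_zero NM_add by blast
lemma NM_lmul: assumes "isL (m - 1) P" "NM m X" shows "NM m (P * X)"
  unfolding NM_def ent_mult
proof (intro allI impI sum.neutral ballI)
  fix a b c assume M: "Mm m a b"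
  show "ent P a c * ent X c b = 0"
  proof (cases "dif (m - 1) a c")
    case True then show ?thesis using assms(1) by (simp add: isL_def)
  next
    case False
    have "dif (m - 1) c b" using M False dif_ultra unfolding Mm_def by blast
    moreover have "\<not> dif m c b"
    proof -
      have "\<not> dif m a c" using False dif_mono[of "m - 1" m a c] by auto
      then show ?thesis using M dif_ultra dif_sym unfolding Mm_def by blast
    qed
    moreover have "prec b c" using prec_cong[of b a "m - 1" c] M False dif_sym unfolding Mm_def by blast
    ultimately have "Mm m c b" by (simp add: Mm_def)
    then show ?thesis using assms(2) by (simp add: NM_def)
  qed
qed
lemma NM_rmul: assumes "isL (m - 1) Q" "NM m X" shows "NM m (X * Q)"
  unfolding NM_def ent_mult
proof (intro allI impI sum.neutral ballI)
  fix a b d assume M: "Mm m a b"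
  show "ent X a d * ent Q d b = 0"
  proof (cases "dif (m - 1) d b")
    case True then show ?thesis using assms(1) by (simp add: isL_def)
  next
    case False
    have "dif (m - 1) a d" using M False dif_ultra dif_sym unfolding Mm_def by blast
    moreover have "\<not> dif m a d"
    proof -
      have "\<not> dif m d b" using False dif_mono[of "m - 1" m d b] by auto
      then show ?thesis using M dif_ultra dif_sym unfolding Mm_def by blast
    qed
    moreover have "prec d a" using prec_cong3[of b a "m - 1" d] M False dif_sym unfolding Mm_def by blast
    ultimately have "Mm m a d" by (simp add: Mm_def)
    then show ?thesis using assms(2) by (simp add: NM_def)
  qed
qed

lemma NM_psi: "1 \<le> i \<Longrightarrow> i < k \<Longrightarrow> NM m (psi m i)"
proof -
  assume h: "1 \<le> i" "i < k"
  show ?thesis unfolding NM_def psi_def ent_L gam_split ent_add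
  proof (intro allI impI)
    fix a b assume M: "Mm m a b"
    then have "a \<noteq> b" "prec b a" unfolding Mm_def by auto
    moreover have "ent (NN i) a b = 0" using NN_U[OF h] \<open>prec b a\<close> prec_asym by (auto simp: U_def)
    ultimately show "(if dif m a b then 0 else ent (del i) a b + ent (NN i) a b) = 0"
      by (simp add: ent_del[OF h])
  qed
qed

lemma NM_sig: "1 \<le> i \<Longrightarrow> i < k \<Longrightarrow> NM m (sig m i)"
proof -
  assume h: "1 \<le> i" "i < k"
  have lmNM: "NM m (lm k (xs (m - 1)) (psi m) j)" if "1 \<le> j" for j
    unfolding lm_def using that
    by (intro NM_sum) (auto simp: NM_zero intro!: NM_lmul isL_xs NM_psi)
  show ?thesis
    unfolding sig_def rm_def using h
    by (intro NM_sum) (auto simp: NM_zero intro!: NM_rmul isL_ginv_xs lmNM[simplified])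
qed

end

context ctx2
begin

interpretation isLm: subalg "isL m" for m by (rule isL_subalg)
interpretation isLw: subalg isLow by (rule isLow_subalg)

lemma Pres_subalg: "vec.subspace S \<Longrightarrow> subalg (Pres S)"
  by unfold_locales (auto intro: Pres_zero Pres_one Pres_add Pres_uminus Pres_mult)

lemma had_diff: "had w (X - Y) = had w X - had w Y"
  by (rule R_eqI) (simp add: ent_diff algebra_simps)
lemma had_add: "had w (X + Y) = had w X + had w Y"
  by (rule R_eqI) (simp add: ent_add algebra_simps)
lemma had_uminus: "had w (- X) = - had w X"
  by (rule R_eqI) (simp add: ent_uminus)

lemma keyinv_Mm:
  assumes "1 \<le> m" "m < k"
  shows "keyinv (m - 1) (\<lambda>a b. if Mm m a b then c (dd m a) (dd m b) else 0)"
  unfolding keyinv_def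
proof (intro allI impI)
  fix a b a' b' assume h: "kk (m - 1) a = kk (m - 1) a'" "kk (m - 1) b = kk (m - 1) b'"
  have e1: "Mm m a b = Mm m a' b'"
  proof -
    have "Mm m a b \<longleftrightarrow> ltJ k ord (m - 1) (kk (m - 1) b) (kk (m - 1) a) \<and> kk m a = kk m b"
      unfolding Mm_def using LT[of "m - 1" b a] dif_sym by (auto simp: dif_def)
    moreover have "Mm m a' b' \<longleftrightarrow> ltJ k ord (m - 1) (kk (m - 1) b') (kk (m - 1) a') \<and> kk m a' = kk m b'"
      unfolding Mm_def using LT[of "m - 1" b' a'] dif_sym by (auto simp: dif_def)
    moreover have "kk m a = kk m a'" "kk m b = kk m b'" using h key_drop[of "m - 1" m] by auto
    ultimately show ?thesis using h by simp
  qed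
  have n1: "\<not> dif (m - 1) a a'" "\<not> dif (m - 1) b b'" using h by (auto simp: dif_def)
  have "dd m a = dd m a'" "dd m b = dd m b'" using dd_key[OF assms n1(1)] dd_key[OF assms n1(2)] by auto
  then show "(if Mm m a b then c (dd m a) (dd m b) else 0) = (if Mm m a' b' then c (dd m a') (dd m b') else 0)"
    using e1 by simp
qed

lemma ent_comm_del: assumes "1 \<le> i" "i < k"
  shows "ent (del i * X - X * del i) a b = (dd i a - dd i b) * ent X a b"
proof -
  have l: "ent (del i * X) a b = dd i a * ent X a b"
  proof -
    have "ent (del i * X) a b = (\<Sum>c\<in>UNIV. if c = a then dd i a * ent X a b else 0)"
      unfolding ent_mult by (rule sum.cong) (auto simp: ent_del[OF assms])
    then show ?thesis by simp
  qed
  have r: "ent (X * del i) a b = ent X a b * dd i b"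
  proof -
    have "ent (X * del i) a b = (\<Sum>c\<in>UNIV. if c = b then ent X a b * dd i b else 0)"
      unfolding ent_mult by (rule sum.cong) (auto simp: ent_del[OF assms])
    then show ?thesis by simp
  qed
  show ?thesis using l r by (simp add: ent_diff algebra_simps)
qed

lemma step:
  assumes subS: "vec.subspace S" and m: "1 \<le> m" "m < k" and gr: "graded m S"
    and rP: "\<And>i. 1 \<le> i \<Longrightarrow> i < k \<Longrightarrow> Pres S (rho m i)"
  shows "graded (m - 1) S \<and> (\<forall>s. 1 \<le> s \<longrightarrow> s < m \<longrightarrow> Pres S (gg m s))
       \<and> (\<forall>i. 1 \<le> i \<longrightarrow> i < k \<longrightarrow> Pres S (rho (m - 1) i))"
proof -
  interpret PS: subalg "Pres S" by (rule Pres_subalg[OF subS])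
  obtain m' where mm: "m = Suc m'" using m by (cases m) auto
  have [simp]: "m - 1 = m'" "m - Suc 0 = m'" using mm by auto
  have mle: "m' \<le> m" using mm by simp
  have ggeq: "gg m = gm (xs m) (ginv (xs m'))" by (simp add: gg_def)
  have sigeq: "sig m = rm k (lm k (xs m') (psi m)) (ginv (xs m'))" by (simp add: sig_def)
  let ?x = "xs m" and ?x' = "xs m'" and ?g = "gg m" and ?\<sigma> = "sig m" and ?\<rho> = "rho m"
  have "Pres S (del m)" using rP[of m] rho_top[of m m] m by simp
  then have gr': "graded m' S" using graded_down[OF subS gr m] by simp
  have x'j: "?x' j = L m' (?x j)" for j by (simp add: xs_def L_L2[OF mle])
  have ginvl: "gm (ginv ?x') ?x' = unit" by (rule ext) (rule gm_ginv_left, simp)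
  have gx: "gm ?g ?x' = ?x"
  proof (rule ext)
    fix j
    have "gm ?g ?x' j = gm ?x (gm (ginv ?x') ?x') j" unfolding ggeq by (rule gm_assoc)
    then show "gm ?g ?x' j = ?x j" by (simp add: ginvl)
  qed
  have g0: "?g 0 = 1" by (simp add: ggeq gm_def)
  have gL: "isL m (?g j)" for j
    unfolding ggeq by (rule isLm.Pgm) (auto simp: isL_xs intro: isL_mono[OF mle isL_ginv_xs])
  have gLow: "j < k \<Longrightarrow> isLow (?g j)" for j
    unfolding ggeq by (rule isLw.Pgm) (auto simp: isLow_xs isLow_ginv_xs)
  have gLm1: "L m' (?g s) = unit s" for s
  proof -
    have "L m' (?g s) = gm (\<lambda>j. L m' (?x j)) (ginv ?x') s"
      unfolding ggeq gm_def L_sum by (rule sum.cong) (auto simp: L_mult_right isL_ginv_xs)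
    also have "\<dots> = gm ?x' (ginv ?x') s" by (simp add: x'j[symmetric])
    also have "\<dots> = unit s" by (rule gm_ginv_right) simp
    finally show ?thesis .
  qed
  have gM: "Mm m a b" if "1 \<le> s" "s < k" "ent (?g s) a b \<noteq> 0" for s a b
  proof -
    have nd: "\<not> dif m a b" using gL[of s] that by (auto simp: isL_def)
    have d: "dif m' a b"
    proof (rule ccontr)
      assume "\<not> dif m' a b"
      then have "ent (L m' (?g s)) a b = ent (?g s) a b" by (simp add: ent_L)
      then show False using gLm1[of s] that by (simp add: unit_def ent_zero)
    qed
    have "\<not> prec a b" using gLow[of s] that by (auto simp: isLow_def)
    moreover have "dif 0 a b" using d dif_mono by blast
    ultimately have "prec b a" using prec_total by blast
    then show ?thesis using nd d by (simp add: Mm_def)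
  qed
  have x'0: "?x' 0 = 1" by simp
  have ginvx: "ginv ?x = gm (ginv ?x') (ginv ?g)"
  proof (rule ext)
    fix j show "ginv ?x j = gm (ginv ?x') (ginv ?g) j"
      using ginv_gm[of ?g ?x' j, OF g0 x'0] gx by simp
  qed
  have \<rho>eq: "?\<rho> = rm k (lm k ?g ?\<sigma>) (ginv ?g)"
  proof (rule ext)
    fix i
    have "?\<rho> i = rm k (lm k (gm ?g ?x') (psi m)) (gm (ginv ?x') (ginv ?g)) i"
      unfolding rho_def gx ginvx ..
    also have "\<dots> = rm k (rm k (lm k (gm ?g ?x') (psi m)) (ginv ?x')) (ginv ?g) i"
      by (rule rm_rm[symmetric])
    also have "\<dots> = rm k (rm k (lm k ?g (lm k ?x' (psi m))) (ginv ?x')) (ginv ?g) i"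
    proof -
      have "lm k (gm ?g ?x') (psi m) = lm k ?g (lm k ?x' (psi m))" by (rule ext) (rule lm_lm[symmetric])
      then show ?thesis by simp
    qed
    also have "\<dots> = rm k (lm k ?g ?\<sigma>) (ginv ?g) i"
    proof -
      have "rm k (lm k ?g (lm k ?x' (psi m))) (ginv ?x') = lm k ?g ?\<sigma>"
        unfolding sigeq by (rule ext) (rule lm_rm[symmetric])
      then show ?thesis by simp
    qed
    finally show "?\<rho> i = rm k (lm k ?g ?\<sigma>) (ginv ?g) i" .
  qed
  have ginvg: "gm (ginv ?g) ?g = unit" by (rule ext) (rule gm_ginv_left, simp add: g0)
  have ginvg2: "gm ?g (ginv ?g) = unit" by (rule ext) (rule gm_ginv_right, simp add: g0)
  have eqn: "rm k ?\<rho> ?g i = lm k ?g ?\<sigma> i" if "i < k" for i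
  proof -
    have "rm k ?\<rho> ?g i = rm k (lm k ?g ?\<sigma>) (gm (ginv ?g) ?g) i" unfolding \<rho>eq by (rule rm_rm)
    also have "\<dots> = lm k ?g ?\<sigma> i" using that by (simp add: ginvg rm_unit)
    finally show ?thesis .
  qed
  have \<sigma>eq: "?\<sigma> i = rm k (lm k (ginv ?g) ?\<rho>) ?g i" if "i < k" for i
  proof -
    have "rm k (lm k (ginv ?g) ?\<rho>) ?g i = lm k (ginv ?g) (rm k ?\<rho> ?g) i" by (rule lm_rm[symmetric])
    also have "\<dots> = lm k (ginv ?g) (lm k ?g ?\<sigma>) i" by (rule lm_cong) (auto simp: eqn)
    also have "\<dots> = lm k (gm (ginv ?g) ?g) ?\<sigma> i" by (rule lm_lm)
    also have "\<dots> = ?\<sigma> i" using that by (simp add: ginvg lm_unit)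
    finally show ?thesis by simp
  qed
  have \<sigma>P: "Pres S (?\<sigma> i)" if i: "1 \<le> i" "i < m" and gP: "\<And>j. 1 \<le> j \<Longrightarrow> j \<le> m - i \<Longrightarrow> Pres S (?g j)" for i
  proof -
    define rp where "rp = (\<lambda>j. if j \<le> m then ?\<rho> j else 0)"
    define hi where "hi = (\<lambda>j. if m < j \<and> j < k then del j else (0::'n R))"
    have rs: "?\<rho> j = rp j + hi j" if "i \<le> j" "j < k" for j
      using that i m rho_top[of m j] by (auto simp: rp_def hi_def)
    have "?\<sigma> i = rm k (lm k (ginv ?g) (\<lambda>j. rp j + hi j)) ?g i"
      unfolding \<sigma>eq[OF less_trans[OF i(2) m(2)]] by (rule rm_cong) (auto intro!: lm_cong simp: rs)
    also have "\<dots> = rm k (lm k (ginv ?g) rp) ?g i + rm k (lm k (ginv ?g) hi) ?g i"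
    proof -
      have "rm k (lm k (ginv ?g) (\<lambda>j. rp j + hi j)) ?g i = rm k (\<lambda>j. lm k (ginv ?g) rp j + lm k (ginv ?g) hi j) ?g i"
        by (rule rm_cong) (auto simp: lm_add)
      then show ?thesis by (simp add: rm_add)
    qed
    also have "rm k (lm k (ginv ?g) hi) ?g i = hi i"
    proof (rule conj_central)
      fix i' j
      have "isL m (ginv ?g j)" by (rule isLm.Pginv) (simp add: gL)
      then show "hi i' * ginv ?g j = ginv ?g j * hi i'"
        using central_del[of i' m] by (auto simp: hi_def)
    next
      fix i' show "gm (ginv ?g) ?g i' = unit i'" by (simp add: ginvg)
    qed (use i m in simp)
    also have "hi i = 0" using i by (simp add: hi_def)
    also have "Pres S (rm k (lm k (ginv ?g) rp) ?g i + 0)"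
    proof -
      have ginvP: "Pres S (ginv ?g j)" if "j \<le> m - i" for j
        by (rule PS.Pginv) (use gP that in auto)
      have gP': "Pres S (?g j)" if "j \<le> m - i" for j
        using gP[of j] that g0 PS.P1 by (cases "j = 0") auto
      have lmP: "Pres S (lm k (ginv ?g) rp j')" if "i \<le> j'" for j'
        unfolding lm_def
      proof (rule PS.Psum)
        fix j assume "j \<in> {..<k}"
        show "Pres S (if j' + j < k then ginv ?g j * rp (j' + j) else 0)"
        proof (cases "j' + j < k \<and> j' + j \<le> m")
          case True
          then show ?thesis using that i ginvP[of j] rP[of "j' + j"]
            by (auto simp: rp_def intro!: PS.Pmul)
        qed (auto simp: rp_def PS.P0)
      qed
      have lmZ: "lm k (ginv ?g) rp j' = 0" if "m < j'" for j'
        unfolding lm_def using that by (intro sum.neutral) (auto simp: rp_def)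
      show ?thesis
        unfolding rm_def
      proof (simp, rule PS.Psum)
        fix l assume "l \<in> {..<k}"
        show "Pres S (if i + l < k then lm k (ginv ?g) rp (i + l) * ?g l else 0)"
        proof (cases "i + l \<le> m")
          case True
          then show ?thesis using lmP[of "i + l"] gP'[of l] by (auto intro!: PS.Pmul simp: PS.P0)
        next
          case False
          then show ?thesis using lmZ[of "i + l"] by (auto simp: PS.P0)
        qed
      qed
    qed
    finally show ?thesis .
  qed
  have G: "Pres S (?g s)" if "1 \<le> s" "s < m" for s
    using that
  proof (induction s rule: less_induct)
    case (less s)
    define i where "i = m - s"
    have i: "1 \<le> i" "i < m" "i + s = m" using less.prems by (auto simp: i_def)
    have ik: "i < k" using i m by simp
    define F where "F = (\<lambda>j. if i + j < k then ?\<rho> (i + j) * ?g j - ?g j * ?\<sigma> (i + j) else 0)"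
    have e1: "?\<rho> i - ?\<sigma> i + (\<Sum>j\<in>{1..<k}. F j) = 0"
    proof -
      define R where "R = (\<Sum>j\<in>{1..<k}. if i + j < k then ?\<rho> (i + j) * ?g j else 0)"
      define L' where "L' = (\<Sum>j\<in>{1..<k}. if i + j < k then ?g j * ?\<sigma> (i + j) else 0)"
      have "rm k ?\<rho> ?g i = lm k ?g ?\<sigma> i" by (rule eqn[OF ik])
      then have A: "?\<rho> i + R = ?\<sigma> i + L'"
        unfolding R_def L'_def using rm_split[OF ik, of ?\<rho> ?g] lm_split[OF ik, of ?g ?\<sigma>] g0 by simp
      have B: "(\<Sum>j\<in>{1..<k}. F j) = R - L'"
        unfolding F_def R_def L'_def sum_subtractf[symmetric] by (rule sum.cong) auto
      have "?\<rho> i - ?\<sigma> i + (\<Sum>j\<in>{1..<k}. F j) = (?\<rho> i + R) - (?\<sigma> i + L')"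
        unfolding B by (simp add: algebra_simps)
      also have "\<dots> = 0" using A by simp
      finally show ?thesis .
    qed
    have Fz: "F j = 0" if "s < j" for j
    proof (cases "i + j < k")
      case True
      have "?\<rho> (i + j) = del (i + j)" "?\<sigma> (i + j) = del (i + j)"
        using rho_top[of m "i + j"] sig_top[of m "i + j"] True that i m by auto
      moreover have "del (i + j) * ?g j = ?g j * del (i + j)"
        using central_del[of "i + j" m "?g j"] True that i gL by auto
      ultimately show ?thesis by (simp add: F_def)
    qed (simp add: F_def)
    have sk: "s < k" using less.prems m by simp
    have Fs: "F s = del m * ?g s - ?g s * del m"
      using rho_top[of m m] sig_top[of m m] m i by (simp add: F_def)
    have "(\<Sum>j\<in>{1..<k}. F j) = (\<Sum>j\<in>{1..<s}. F j) + (\<Sum>j\<in>{s..<k}. F j)"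
      using less.prems sk by (simp add: sum.atLeastLessThan_concat)
    also have "(\<Sum>j\<in>{s..<k}. F j) = F s + (\<Sum>j\<in>{Suc s..<k}. F j)"
      using sk by (simp add: sum.atLeast_Suc_lessThan)
    also have "(\<Sum>j\<in>{Suc s..<k}. F j) = 0" by (rule sum.neutral) (auto simp: Fz)
    finally have sumF: "(\<Sum>j\<in>{1..<k}. F j) = (\<Sum>j\<in>{1..<s}. F j) + F s" by simp
    define C where "C = del m * ?g s - ?g s * del m"
    have SF: "(\<Sum>j\<in>{1..<k}. F j) = ?\<sigma> i - ?\<rho> i"
    proof -
      have "(\<Sum>j\<in>{1..<k}. F j) = - (?\<rho> i - ?\<sigma> i)" using e1 add_eq_0_iff by blast
      then show ?thesis by simp
    qed
    have Ceq: "C = ?\<sigma> i - ?\<rho> i - (\<Sum>j\<in>{1..<s}. F j)"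
    proof -
      have "(\<Sum>j\<in>{1..<k}. F j) = (\<Sum>j\<in>{1..<s}. F j) + C" using sumF Fs by (simp add: C_def)
      then have "C = (\<Sum>j\<in>{1..<k}. F j) - (\<Sum>j\<in>{1..<s}. F j)" by (simp add: algebra_simps)
      then show ?thesis using SF by simp
    qed
    define Pm where "Pm = had (\<lambda>a b. if Mm m a b then 1 else 0)"
    have entC: "ent C a b = (dd m a - dd m b) * ent (?g s) a b" for a b
      unfolding C_def using ent_comm_del m by simp
    have PmC: "Pm C = C"
      by (rule R_eqI) (auto simp: Pm_def entC dest: gM[OF less.prems(1) sk])
    have Pm\<sigma>: "Pm (?\<sigma> i) = 0"
      using NM_sig[OF i(1) ik, of m] by (intro R_eqI) (auto simp: Pm_def NM_def ent_zero)
    have "C = - Pm (?\<rho> i + (\<Sum>j\<in>{1..<s}. F j))"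
      using PmC Ceq Pm\<sigma> by (simp add: Pm_def had_diff had_add had_uminus)
    moreover have "Pres S (?\<rho> i + (\<Sum>j\<in>{1..<s}. F j))"
    proof (rule PS.Padd)
      show "Pres S (?\<rho> i)" using rP i ik by simp
      show "Pres S (\<Sum>j\<in>{1..<s}. F j)"
      proof (rule PS.Psum)
        fix j assume j: "j \<in> {1..<s}"
        have "Pres S (?g j)" using less.IH[of j] j less.prems by auto
        moreover have "Pres S (?\<rho> (i + j))" using rP[of "i + j"] j i sk less.prems m by auto
        moreover have "Pres S (?\<sigma> (i + j))"
        proof (rule \<sigma>P)
          show "1 \<le> i + j" "i + j < m" using i j by auto
          fix j' assume "1 \<le> j'" "j' \<le> m - (i + j)"
          then show "Pres S (?g j')" using less.IH[of j'] i j less.prems by auto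
        qed
        ultimately show "Pres S (F j)" by (auto simp: F_def intro!: PS.Pdiff PS.Pmul PS.P0)
      qed
    qed
    ultimately have CP: "Pres S C"
      unfolding Pm_def
      by (auto intro!: PS.Pneg mask_Pres[OF subS gr'] keyinv_Mm[OF m, where c="\<lambda>x y. 1", simplified])
    have "?g s = had (\<lambda>a b. if Mm m a b then inverse (dd m a - dd m b) else 0) C"
    proof (rule R_eqI)
      fix a b
      show "ent (?g s) a b = ent (had (\<lambda>a b. if Mm m a b then inverse (dd m a - dd m b) else 0) C) a b"
      proof (cases "Mm m a b")
        case True
        then have "dd m a \<noteq> dd m b" using dd_dif[OF m(1) m(2)] unfolding Mm_def by auto
        then show ?thesis using True by (simp add: entC)
      next
        case False
        then show ?thesis using gM[OF less.prems(1) sk, of a b] by auto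
      qed
    qed
    also have "Pres S \<dots>"
    proof -
      have "keyinv m' (\<lambda>a b. if Mm m a b then inverse (dd m a - dd m b) else 0)"
        using keyinv_Mm[OF m, where c="\<lambda>x y. inverse (x - y)"] by simp
      then show ?thesis by (rule mask_Pres[OF subS gr' CP])
    qed
    finally show ?case .
  qed
  have RP: "Pres S (rho m' i)" if i: "1 \<le> i" "i < k" for i
  proof -
    have req: "rho m' i = L m' (?\<sigma> i)"
    proof -
      have "L m' (?\<sigma> i) = rm k (lm k ?x' (\<lambda>j. L m' (psi m j))) (ginv ?x') i"
        unfolding sigeq by (rule L_conj) (auto simp: isL_xs isL_ginv_xs)
      moreover have "(\<lambda>j. L m' (psi m j)) = psi m'"
        by (rule ext) (simp add: psi_def L_L2[OF mle])
      ultimately show ?thesis by (simp add: rho_def)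
    qed
    moreover have sP: "Pres S (?\<sigma> i)"
    proof (cases "m \<le> i")
      case True
      then show ?thesis using sig_top[of m i] m i Pres_del[OF subS gr', of i] using mm by auto
    next
      case False
      then show ?thesis using \<sigma>P[of i] G i by auto
    qed
    moreover have kv: "keyinv m' (\<lambda>a b. if dif m' a b then 0 else (1::complex))"
      using keyinv_dif[of m' m' "\<lambda>d. if d then 0 else (1::complex)"] by simp
    have "Pres S (had (\<lambda>a b. if dif m' a b then 0 else 1) (?\<sigma> i))"
      by (rule mask_Pres[OF subS gr' sP kv])
    then show ?thesis unfolding req L_def .
  qed
  have c1: "graded (m - 1) S" using gr' by simp
  moreover have c2: "\<forall>s. 1 \<le> s \<longrightarrow> s < m \<longrightarrow> Pres S (gg m s)" using G by blast
  moreover have c3: "\<forall>i. 1 \<le> i \<longrightarrow> i < k \<longrightarrow> Pres S (rho (m - 1) i)" using RP by simp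
  ultimately show ?thesis by blast
qed

end

context ctx2
begin

interpretation isLm: subalg "isL m" for m by (rule isL_subalg)

lemma L_top: "L (k - 1) X = X"
  by (rule R_eqI) (auto simp: ent_L dest: dif_top)

lemma L_top': "L (k - Suc 0) X = X" using L_top by simp

lemma gg_xs: "1 \<le> m \<Longrightarrow> gm (gg m) (xs (m - 1)) j = xs m j"
proof -
  assume "1 \<le> m"
  have "gm (gg m) (xs (m - 1)) j = gm (xs m) (gm (ginv (xs (m - 1))) (xs (m - 1))) j"
    unfolding gg_def by (rule gm_assoc)
  also have "gm (ginv (xs (m - 1))) (xs (m - 1)) = unit" by (rule ext) (rule gm_ginv_left, simp)
  finally show ?thesis by simp
qed

lemma gg0: "gg m 0 = 1" by (simp add: gg_def gm_def)

lemma xs_high: "1 \<le> j \<Longrightarrow> j < k \<Longrightarrow> m \<le> j \<Longrightarrow> xs m j = 0"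
proof -
  assume h: "1 \<le> j" "j < k" "m \<le> j"
  show ?thesis
  proof (rule R_eqI)
    fix a b
    have "ent (bm j) a b \<noteq> 0 \<Longrightarrow> dif m a b" using bm_u[OF h(1,2)] dif_mono[OF h(3)] by blast
    then show "ent (xs m j) a b = ent 0 a b" by (auto simp: xs_def ent_L ent_zero)
  qed
qed

lemma ii_core:
  assumes subS: "vec.subspace S"
    and \<beta>P: "\<And>i. 1 \<le> i \<Longrightarrow> i < k \<Longrightarrow> Pres S (rm k (lm k bm gam) (ginv bm) i)"
  shows "graded 0 S \<and> (\<forall>j<k. Pres S (bm j))"
proof -
  interpret PS: subalg "Pres S" by (rule Pres_subalg[OF subS])
  define P where "P m \<longleftrightarrow> graded m S \<and> (\<forall>i. 1 \<le> i \<longrightarrow> i < k \<longrightarrow> Pres S (rho m i))" for m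
  have xtop: "xs (k - 1) = bm" by (rule ext) (simp add: xs_def L_top L_top')
  have ptop: "psi (k - 1) = gam" by (rule ext) (simp add: psi_def L_top L_top')
  have xtop': "xs (k - Suc 0) = bm" using xtop by simp
  have ptop': "psi (k - Suc 0) = gam" using ptop by simp
  have Ptop: "P (k - 1)"
  proof -
    have "graded (k - 1) S"
      unfolding graded_def
    proof (intro ballI allI)
      fix v p assume v: "v \<in> S"
      show "proj (k - 1) p v \<in> S"
      proof (cases "p = []")
        case True
        then have "proj (k - 1) p v = v" by (simp add: proj_def key_top vec_eq_iff)
        then show ?thesis using v by simp
      next
        case False
        then have "proj (k - 1) p v = 0" by (simp add: proj_def key_top vec_eq_iff)
        then show ?thesis using subS vec.subspace_0 by simp
      qed
    qed
    moreover have "rho (k - 1) = rm k (lm k bm gam) (ginv bm)" by (simp add: rho_def xtop ptop xtop' ptop')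
    ultimately show ?thesis using \<beta>P by (simp add: P_def)
  qed
  have stepP: "P (m - 1) \<and> (\<forall>s. 1 \<le> s \<longrightarrow> s < m \<longrightarrow> Pres S (gg m s))" if "1 \<le> m" "m < k" "P m" for m
    using step[OF subS that(1,2)] that(3) unfolding P_def by blast
  have allP: "P (k - 1 - n)" if "n \<le> k - 1" for n
    using that
  proof (induction n)
    case 0 then show ?case using Ptop by simp
  next
    case (Suc n)
    then have "P (k - 1 - n)" by simp
    then have "P (k - 1 - n - 1)" using stepP[of "k - 1 - n"] Suc.prems by auto
    then show ?case by (simp add: diff_diff_add)
  qed
  have Pm: "P m" if "m \<le> k - 1" for m
  proof -
    have e: "k - 1 - (k - 1 - m) = m" using that by arith
    have "k - 1 - m \<le> k - 1" by simp
    then show ?thesis using allP[of "k - 1 - m", unfolded e] by blast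
  qed
  have G: "Pres S (gg m s)" if "1 \<le> m" "m < k" "1 \<le> s" "s < m" for m s
    using stepP[OF that(1,2) Pm] that by auto
  have XP: "Pres S (xs m j)" if "m \<le> k - 1" "j < k" for m j
    using that
  proof (induction m arbitrary: j)
    case 0
    show ?case
    proof (cases "j = 0")
      case True then show ?thesis by (simp add: PS.P1)
    next
      case False
      then show ?thesis using xs_high[of j 0] 0 by (simp add: PS.P0)
    qed
  next
    case (Suc m)
    show ?case
    proof (cases "Suc m \<le> j \<and> 1 \<le> j")
      case True
      then show ?thesis using xs_high[of j "Suc m"] Suc.prems by (simp add: PS.P0)
    next
      case False
      then have jm: "j \<le> m" by auto
      have "xs (Suc m) j = gm (gg (Suc m)) (xs m) j" using gg_xs[of "Suc m" j] by simp
      also have "Pres S \<dots>"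
      proof (rule PS.Pgm)
        fix s assume s: "s \<le> j"
        have "Pres S (gg (Suc m) s)"
        proof (cases "s = 0")
          case True then show ?thesis by (simp add: gg0 PS.P1)
        next
          case False then show ?thesis using G[of "Suc m" s] s jm Suc.prems by auto
        qed
        moreover have "Pres S (xs m s)" using Suc.IH[of s] Suc.prems s jm by auto
        ultimately show "Pres S (gg (Suc m) s) \<and> Pres S (xs m s)" by simp
      qed
      finally show ?thesis .
    qed
  qed
  have "graded 0 S" using Pm[of 0] by (simp add: P_def)
  moreover have "\<forall>j<k. Pres S (bm j)" using XP[of "k - 1"] xtop xtop' by simp
  ultimately show ?thesis by simp
qed

lemma keyinv0_U: "keyinv 0 (\<lambda>a b. if prec a b \<and> dif i a b then c else 0)"
  unfolding keyinv_def
proof (intro allI impI)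
  fix a b a' b' assume h: "kk 0 a = kk 0 a'" "kk 0 b = kk 0 b'"
  have "prec a b = prec a' b'" using prec_key h by blast
  moreover have "dif i a b = dif i a' b'" using h key_drop[of 0 i] by (simp add: dif_def)
  ultimately show "(if prec a b \<and> dif i a b then c else 0) = (if prec a' b' \<and> dif i a' b' then c else 0)" by simp
qed

lemma i_core:
  assumes subS: "vec.subspace S" and gr: "graded 0 S" and bmP: "\<And>j. j < k \<Longrightarrow> Pres S (bm j)"
    and PP: "\<And>i. 1 \<le> i \<Longrightarrow> i < k \<Longrightarrow> Pres S (had (\<lambda>a b. if prec a b \<and> dif i a b then 1 else 0)
                (lm k (ginv bm) (rm k (lm k bm gam) (ginv bm)) i))"
  shows "\<And>i. 1 \<le> i \<Longrightarrow> i < k \<Longrightarrow> Pres S (rm k (lm k bm gam) (ginv bm) i)"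
proof -
  interpret PS: subalg "Pres S" by (rule Pres_subalg[OF subS])
  let ?c = "ginv bm"
  define Ui where "Ui i = had (\<lambda>a b. if prec a b \<and> dif i a b then 1 else 0)" for i
  have cP: "Pres S (?c j)" if "j < k" for j by (rule PS.Pginv) (use bmP that in auto)
  have bp': "lm k ?c (rm k (lm k bm gam) ?c) i = rm k gam ?c i" if "i < k" for i
  proof -
    have "lm k ?c (rm k (lm k bm gam) ?c) i = rm k (lm k ?c (lm k bm gam)) ?c i" by (rule lm_rm)
    also have "\<dots> = rm k (lm k (gm ?c bm) gam) ?c i" by (rule rm_cong) (auto simp: lm_lm)
    also have "\<dots> = rm k gam ?c i"
    proof (rule rm_cong)
      show "\<forall>j. i \<le> j \<longrightarrow> j < k \<longrightarrow> lm k (gm ?c bm) gam j = gam j"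
      proof (intro allI impI)
        fix j assume "i \<le> j" "j < k"
        have "gm ?c bm = unit" by (rule ext) (rule gm_ginv_left, simp add: bm0)
        then show "lm k (gm ?c bm) gam j = gam j" using \<open>j < k\<close> by (simp add: lm_unit)
      qed
    qed simp
    finally show ?thesis .
  qed
  have UN: "Ui i (gam i) = NN i" if "1 \<le> i" "i < k" for i
  proof (rule R_eqI)
    fix a b
    show "ent (Ui i (gam i)) a b = ent (NN i) a b"
      using NN_U[OF that] unfolding Ui_def gam_split
      by (auto simp: ent_add ent_del[OF that] U_def) (metis prec_irrefl)
  qed
  have gP: "Pres S (gam i)" if "1 \<le> i" "i < k" for i
    using that
  proof (induction "k - i" arbitrary: i rule: less_induct)
    case less
    have ik: "i < k" using less.prems by simp
    have e: "lm k ?c (rm k (lm k bm gam) ?c) i = gam i + (\<Sum>j\<in>{1..<k}. if i + j < k then gam (i + j) * ?c j else 0)"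
      using bp'[OF ik] rm_split[OF ik, of gam ?c] by simp
    have sP: "Pres S (\<Sum>j\<in>{1..<k}. if i + j < k then gam (i + j) * ?c j else 0)"
    proof (rule PS.Psum)
      fix j assume j: "j \<in> {1..<k}"
      show "Pres S (if i + j < k then gam (i + j) * ?c j else 0)"
        using less.hyps[of "i + j"] j less.prems cP[of j] by (auto intro!: PS.Pmul simp: PS.P0)
    qed
    have "NN i = Ui i (lm k ?c (rm k (lm k bm gam) ?c) i) - Ui i (\<Sum>j\<in>{1..<k}. if i + j < k then gam (i + j) * ?c j else 0)"
      unfolding e Ui_def had_add UN[OF less.prems, unfolded Ui_def] by simp
    moreover have "Pres S (Ui i (\<Sum>j\<in>{1..<k}. if i + j < k then gam (i + j) * ?c j else 0))"
      unfolding Ui_def by (rule mask_Pres[OF subS gr sP keyinv0_U])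
    moreover have "Pres S (Ui i (lm k ?c (rm k (lm k bm gam) ?c) i))"
      unfolding Ui_def using PP less.prems by simp
    ultimately have "Pres S (NN i)" by (simp add: PS.Pdiff)
    moreover have "Pres S (del i)" using Pres_del[OF subS gr, of i] less.prems by simp
    ultimately show ?case by (simp add: gam_split PS.Padd)
  qed
  fix i assume i: "1 \<le> i" "i < k"
  have gP': "Pres S (gam j)" if "i \<le> j" "j < k" for j using gP[of j] that i by auto
  have lP: "Pres S (lm k bm gam j)" if "i \<le> j" "j < k" for j
    by (rule PS.Plm) (use bmP gP' that in auto)
  show "Pres S (rm k (lm k bm gam) ?c i)"
    by (rule PS.Prm) (use cP lP in auto)
qed

end

lemma Abs_tmul: "Abs (tmul f g i) = gm (\<lambda>j. Abs (f j)) (\<lambda>j. Abs (g j)) i"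
  by (simp add: tmul_def gm_def Abs_sum Abs_mult)

lemma Abs_tinv: "Abs (tinv f m) = ginv (\<lambda>j. Abs (f j)) m"
proof (induction m rule: less_induct)
  case (less m)
  show ?case
  proof (cases "m = 0")
    case True then show ?thesis by (subst tinv.simps) (simp add: Abs_one del: tinv.simps)
  next
    case False
    have "tinv f m = - (\<Sum>j\<in>{1..m}. f j ** tinv f (m - j))" using False by (subst tinv.simps) (simp del: tinv.simps)
    moreover have "ginv (\<lambda>j. Abs (f j)) m = - (\<Sum>j\<in>{1..m}. Abs (f j) * ginv (\<lambda>j. Abs (f j)) (m - j))"
      using False by (subst ginv.simps) simp
    moreover have "(\<Sum>j\<in>{1..m}. Abs (f j) * ginv (\<lambda>j. Abs (f j)) (m - j)) = (\<Sum>j\<in>{1..m}. Abs (f j ** tinv f (m - j)))"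
      by (rule sum.cong) (use less False in \<open>auto simp: Abs_mult simp del: tinv.simps\<close>)
    ultimately show ?thesis by (simp add: Abs_uminus Abs_sum del: tinv.simps)
  qed
qed

lemma Abs_coad: "Abs (coad k b X m) = rm k (lm k (\<lambda>j. Abs (b j)) (\<lambda>j. Abs (X j))) (ginv (\<lambda>j. Abs (b j))) m"
proof -
  have "Abs (coad k b X m) = (\<Sum>j<k. \<Sum>l<k. if m + j + l < k then Abs (b j) * Abs (X (m + j + l)) * ginv (\<lambda>j. Abs (b j)) l else 0)"
    by (simp add: coad_def Abs_sum Abs_mult Abs_tinv if_distrib Abs_zero del: tinv.simps cong: if_cong)
  also have "\<dots> = (\<Sum>l<k. \<Sum>j<k. if m + j + l < k then Abs (b j) * Abs (X (m + j + l)) * ginv (\<lambda>j. Abs (b j)) l else 0)"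
    by (rule sum.swap)
  also have "\<dots> = rm k (lm k (\<lambda>j. Abs (b j)) (\<lambda>j. Abs (X j))) (ginv (\<lambda>j. Abs (b j))) m"
    unfolding rm_def lm_def by (rule sum.cong) (auto simp: sum_distrib_right ac_simps intro!: sum.cong)
  finally show ?thesis .
qed

lemma Abs_Bprime: "Abs (Bprime k bm B m) = lm k (ginv (\<lambda>j. Abs (bm j))) (\<lambda>j. Abs (B j)) m"
  by (simp add: Bprime_def lm_def Abs_sum Abs_mult Abs_tinv if_distrib Abs_zero del: tinv.simps cong: if_cong)

lemma ent_Abs[simp]: "ent (Abs X) a b = X $ a $ b" by (simp add: ent_def)

lemma Pres_Abs: "Pres S (Abs X) \<longleftrightarrow> invariant_under S X"
  by (simp add: Pres_def invariant_under_def)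

context ctx
begin

lemma proj_sum: "v = (\<Sum>p\<in>J k T 0. proj 0 p v)"
proof (rule vec_eq_iff[THEN iffD2], rule allI)
  fix a
  have "(\<Sum>p\<in>J k T 0. proj 0 p v) $ a = (\<Sum>p\<in>J k T 0. if p = kk 0 a then v $ a else 0)"
    by (simp add: proj_def eq_commute)
  also have "\<dots> = v $ a" by (simp add: finJ key_J)
  finally show "v $ a = (\<Sum>p\<in>J k T 0. proj 0 p v) $ a" by simp
qed

lemma proj_Vsp: "proj 0 p v \<in> Vsp k T 0 p" by (simp add: proj_def Vsp_def)
lemma Vsp_proj: "v \<in> Vsp k T 0 p \<Longrightarrow> proj 0 p v = v" by (auto simp: proj_def Vsp_def vec_eq_iff)
lemma Vsp_proj_other: "v \<in> Vsp k T 0 q \<Longrightarrow> p \<noteq> q \<Longrightarrow> proj 0 p v = 0" by (auto simp: proj_def Vsp_def vec_eq_iff)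
lemma Vsp_sub: "vec.subspace (Vsp k T 0 p)"
  by (auto simp: vec.subspace_def Vsp_def)

lemma block_mv: "block k T X p q *v w = proj 0 q (X *v proj 0 p w)"
proof (rule vec_eq_iff[THEN iffD2], rule allI)
  fix a
  have "(\<Sum>b\<in>UNIV. (if kk 0 a = q \<and> kk 0 b = p then X $ a $ b else 0) * w $ b)
      = (if kk 0 a = q then (\<Sum>b\<in>UNIV. X $ a $ b * (if kk 0 b = p then w $ b else 0)) else 0)"
    by (auto intro!: sum.cong)
  then show "(block k T X p q *v w) $ a = proj 0 q (X *v proj 0 p w) $ a"
    by (simp add: block_def matrix_vector_mult_def proj_def)
qed

lemma proj_proj[simp]: "proj m p (proj m p v) = proj m p v" by (simp add: proj_def vec_eq_iff)

lemma bl_comp: "(block k T X p q *v proj 0 p v) $ a = (if q = kk 0 a then (X *v proj 0 p v) $ a else 0)"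
  unfolding block_mv proj_proj by (simp add: proj_def eq_commute)

lemma mv_decomp: "X *v v = (\<Sum>p\<in>J k T 0. \<Sum>q\<in>J k T 0. block k T X p q *v proj 0 p v)"
proof (rule vec_eq_iff[THEN iffD2], rule allI)
  fix a
  have "(\<Sum>p\<in>J k T 0. \<Sum>q\<in>J k T 0. block k T X p q *v proj 0 p v) $ a
      = (\<Sum>p\<in>J k T 0. \<Sum>q\<in>J k T 0. if q = kk 0 a then (X *v proj 0 p v) $ a else 0)"
    by (simp add: bl_comp)
  also have "\<dots> = (\<Sum>p\<in>J k T 0. (X *v proj 0 p v) $ a)"
    by (simp add: key_J finJ)
  also have "\<dots> = (\<Sum>p\<in>J k T 0. \<Sum>b\<in>UNIV. if p = kk 0 b then X $ a $ b * v $ b else 0)"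
    by (auto simp: matrix_vector_mult_def proj_def intro!: sum.cong)
  also have "\<dots> = (\<Sum>b\<in>UNIV. \<Sum>p\<in>J k T 0. if p = kk 0 b then X $ a $ b * v $ b else 0)"
    by (rule sum.swap)
  also have "\<dots> = (\<Sum>b\<in>UNIV. X $ a $ b * v $ b)"
    by (simp add: key_J finJ)
  finally have F: "(\<Sum>p\<in>J k T 0. \<Sum>q\<in>J k T 0. block k T X p q *v proj 0 p v) $ a = (\<Sum>b\<in>UNIV. X $ a $ b * v $ b)" .
  show "(X *v v) $ a = (\<Sum>p\<in>J k T 0. \<Sum>q\<in>J k T 0. block k T X p q *v proj 0 p v) $ a"
  proof -
    have L: "(X *v v) $ a = (\<Sum>b\<in>UNIV. X $ a $ b * v $ b)"
      unfolding matrix_vector_mult_def by (rule vec_lambda_beta)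
    show ?thesis by (rule trans[OF L F[symmetric]])
  qed
qed

lemma inv_blocks:
  assumes subS: "vec.subspace S" and gr: "graded 0 S"
    and bl: "\<And>p q w. p \<in> J k T 0 \<Longrightarrow> q \<in> J k T 0 \<Longrightarrow> w \<in> S \<Longrightarrow> w \<in> Vsp k T 0 p \<Longrightarrow> block k T X p q *v w \<in> S"
  shows "invariant_under S X"
  unfolding invariant_under_def
proof
  fix v assume v: "v \<in> S"
  show "X *v v \<in> S"
    apply (subst mv_decomp)
  proof (intro vec.subspace_sum[OF subS])
    fix p q assume p: "p \<in> J k T 0" and q: "q \<in> J k T 0"
    have "proj 0 p v \<in> S" using gr v by (simp add: graded_def)
    then show "block k T X p q *v proj 0 p v \<in> S" by (rule bl[OF p q _ proj_Vsp])
  qed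
qed

lemma mpq_ge: assumes "ltJ k ord i (kk i a) (kk i b)" shows "i \<le> mpq k ord (kk 0 a) (kk 0 b)"
proof -
  have i: "i < k - 1" using assms by (simp add: ltJ_def)
  have "pi_J i (kk 0 a) = kk i a" "pi_J i (kk 0 b) = kk i b" using key_drop[of 0 i] by (auto simp: pi_J_def)
  then have mem: "i \<in> {i. i \<le> k - 2 \<and> ltJ k ord i (pi_J i (kk 0 a)) (pi_J i (kk 0 b))}" using assms i by auto
  have fin: "finite {i. i \<le> k - 2 \<and> ltJ k ord i (pi_J i (kk 0 a)) (pi_J i (kk 0 b))}" by simp
  show ?thesis unfolding mpq_def by (rule Max_ge[OF fin mem])
qed

lemma mpq_le: assumes "ltJ k ord 0 p q" shows "mpq k ord p q \<le> k - 2"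
proof -
  have "0 \<in> {i. i \<le> k - 2 \<and> ltJ k ord i (pi_J i p) (pi_J i q)}" using assms by (simp add: pi_J_def)
  then have "{i. i \<le> k - 2 \<and> ltJ k ord i (pi_J i p) (pi_J i q)} \<noteq> {}" by blast
  moreover have "finite {i. i \<le> k - 2 \<and> ltJ k ord i (pi_J i p) (pi_J i q)}" by simp
  ultimately show ?thesis unfolding mpq_def by (subst Max_le_iff) auto
qed

end

theorem lemma3p11:
  fixes k :: nat
    and T :: "nat \<Rightarrow> complex^'n::finite^'n"
    and ord :: "nat \<Rightarrow> (complex list \<times> complex list) set"
    and b bm bp B :: "nat \<Rightarrow> complex^'n^'n"
  assumes k: "k > 1"
    and T_cartan: "\<forall>i\<in>{1..k-1}. is_diag (T i)"
    and T_top: "T (k - 1) \<noteq> 0"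
    and ord_total: "\<forall>i\<le>k-2. strict_linear_order_on (J k T i) (ord i)"
    and ord_compat: "\<forall>i. i + 1 \<le> k - 2 \<longrightarrow> (\<forall>p\<in>J k T i. \<forall>q\<in>J k T i.
                       (pi_J 1 p, pi_J 1 q) \<in> ord (i + 1) \<longrightarrow> (p, q) \<in> ord i)"
    and b_Bk: "b 0 = mat 1"
    and B_orbit: "\<forall>m\<in>{1..k-1}. B m = coad k b (dT T) m"
    and fact: "\<forall>i<k. b i = tmul bm bp i"
    and bm0: "bm 0 = mat 1" and bp0: "bp 0 = mat 1"
    and bm_u: "\<forall>i\<in>{1..k-1}. u_minus k T ord i (bm i)"
    and bp_p: "\<forall>i\<in>{1..k-1}. p_plus k T ord i (bp i)"
  shows "(\<forall>W. Xi_invariant k T ord bm B W \<longrightarrow>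
            (\<forall>i\<in>{1..k-1}. invariant_under (vec.span (\<Union>p\<in>J k T 0. W p)) (B i)))
       \<and> (\<forall>S. vec.subspace S \<and> (\<forall>i\<in>{1..k-1}. invariant_under S (B i)) \<longrightarrow>
            S = vec.span (\<Union>p\<in>J k T 0. S \<inter> Vsp k T 0 p)
          \<and> Xi_invariant k T ord bm B (\<lambda>p. S \<inter> Vsp k T 0 p))"
proof -
  define bmR where "bmR = (\<lambda>j. Abs (bm j))"
  define bpR where "bpR = (\<lambda>j. Abs (bp j))"
  define bR where "bR = (\<lambda>j. Abs (b j))"
  interpret C: ctx k T ord using k T_cartan ord_total ord_compat by unfold_locales
  have bm_u': "C.prec b' a \<and> C.dif i a b'" if "1 \<le> i" "i < k" "ent (bmR i) a b' \<noteq> 0" for i a b'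
  proof -
    have "u_minus k T ord i (bm i)" using bm_u that by auto
    then have "ltJ k ord i (key k T i b') (key k T i a)" using that by (auto simp: u_minus_def bmR_def)
    then show ?thesis using C.LT C.dif_sym by blast
  qed
  have bp_p': "\<not> C.dif i a b' \<or> C.prec a b'" if "1 \<le> i" "i < k" "ent (bpR i) a b' \<noteq> 0" for i a b'
  proof -
    have "p_plus k T ord i (bp i)" using bp_p that by auto
    then have "leJ k ord i (key k T i a) (key k T i b')" using that by (auto simp: p_plus_def bpR_def)
    then show ?thesis using C.LT by (auto simp: leJ_def C.dif_def)
  qed
  have bm0R: "bmR 0 = 1" by (simp add: bmR_def bm0 Abs_one)
  have bp0R: "bpR 0 = 1" by (simp add: bpR_def bp0 Abs_one)
  have ctx2_ax: "ctx2_axioms k T ord bmR bpR"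
  proof
    show "bmR 0 = 1" by (rule bm0R)
    show "bpR 0 = 1" by (rule bp0R)
    show "C.prec b' a \<and> C.dif i a b'" if "1 \<le> i" "i < k" "ent (bmR i) a b' \<noteq> 0" for i a b'
      by (rule bm_u'[OF that])
    show "\<not> C.dif i a b' \<or> C.prec a b'" if "1 \<le> i" "i < k" "ent (bpR i) a b' \<noteq> 0" for i a b'
      by (rule bp_p'[OF that])
  qed
  interpret D: ctx2 k T ord bmR bpR
    by (intro ctx2.intro C.ctx_axioms ctx2_ax)
  define \<beta> where "\<beta> = rm k (lm k bmR D.gam) (ginv bmR)"
  have bR_eq: "bR j = gm bmR bpR j" if "j < k" for j
    using fact that by (simp add: bR_def bmR_def bpR_def Abs_tmul)
  have b0R: "bR 0 = 1" by (simp add: bR_def b_Bk Abs_one)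
  have \<beta>eq: "Abs (B m) = \<beta> m" if "1 \<le> m" "m < k" for m
  proof -
    have "Abs (B m) = rm k (lm k bR C.del) (ginv bR) m"
    proof -
      have delf: "C.del = (\<lambda>j. Abs (dT T j))" by (rule ext) (simp add: C.del_def)
      show ?thesis using B_orbit that by (simp add: Abs_coad bR_def delf)
    qed
    also have "\<dots> = rm k (lm k (gm bmR bpR) C.del) (gm (ginv bpR) (ginv bmR)) m"
    proof (rule rm_cong)
      show "\<forall>j<k. ginv bR j = gm (ginv bpR) (ginv bmR) j"
      proof (intro allI impI)
        fix j assume "j < k"
        have "ginv bR j = ginv (gm bmR bpR) j" using ginv_prefix[of k bR "gm bmR bpR" j] bR_eq \<open>j < k\<close> by blast
        then show "ginv bR j = gm (ginv bpR) (ginv bmR) j" using ginv_gm[of bmR bpR, OF bm0R bp0R] by simp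
      qed
      show "\<forall>j. m \<le> j \<longrightarrow> j < k \<longrightarrow> lm k bR C.del j = lm k (gm bmR bpR) C.del j"
        using bR_eq by (auto intro!: lm_cong)
    qed
    also have "\<dots> = rm k (rm k (lm k (gm bmR bpR) C.del) (ginv bpR)) (ginv bmR) m"
      by (rule rm_rm[symmetric])
    also have "\<dots> = rm k (rm k (lm k bmR (lm k bpR C.del)) (ginv bpR)) (ginv bmR) m"
    proof -
      have "lm k (gm bmR bpR) C.del = lm k bmR (lm k bpR C.del)" by (rule ext) (rule lm_lm[symmetric])
      then show ?thesis by simp
    qed
    also have "\<dots> = rm k (lm k bmR D.gam) (ginv bmR) m"
    proof -
      have "rm k (lm k bmR (lm k bpR C.del)) (ginv bpR) = lm k bmR D.gam"
        unfolding D.gam_def by (rule ext) (rule lm_rm[symmetric])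
      then show ?thesis by simp
    qed
    finally show ?thesis by (simp add: \<beta>_def)
  qed
  have Pm_eq: "Abs (Pmat k T ord bm B i) = had (\<lambda>a b. if C.prec a b \<and> C.dif i a b then 1 else 0) (lm k (ginv bmR) \<beta> i)"
    if i: "1 \<le> i" "i < k" for i
  proof -
    have "Abs (Bprime k bm B i) = lm k (ginv bmR) (\<lambda>j. Abs (B j)) i" by (simp add: Abs_Bprime bmR_def)
    also have "\<dots> = lm k (ginv bmR) \<beta> i" by (rule lm_cong) (use i \<beta>eq in auto)
    finally have e: "Abs (Bprime k bm B i) = lm k (ginv bmR) \<beta> i" .
    show ?thesis
    proof (rule R_eqI)
      fix a b'
      have "ent (Abs (Pmat k T ord bm B i)) a b' = (if C.prec a b' \<and> C.dif i a b' then ent (Abs (Bprime k bm B i)) a b' else 0)"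
        using C.LT by (simp add: Pmat_def uplus_part_def)
      then show "ent (Abs (Pmat k T ord bm B i)) a b' = ent (had (\<lambda>a b. if C.prec a b \<and> C.dif i a b then 1 else 0) (lm k (ginv bmR) \<beta> i)) a b'"
        by (simp add: e)
    qed
  qed
  have arrow_mpq: "i \<le> k - 2" if "ltJ k ord 0 p q" "i \<le> mpq k ord p q" for i p q
    using C.mpq_le[OF that(1)] that(2) by simp
  show ?thesis
  proof
    show "\<forall>W. Xi_invariant k T ord bm B W \<longrightarrow> (\<forall>i\<in>{1..k - 1}. invariant_under (vec.span (\<Union>p\<in>J k T 0. W p)) (B i))"
    proof (intro allI impI)
      fix W assume XI: "Xi_invariant k T ord bm B W"
      define S where "S = vec.span (\<Union>p\<in>J k T 0. W p)"
      have Wsub: "vec.subspace (W p)" "W p \<subseteq> Vsp k T 0 p" if "p \<in> J k T 0" for p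
        using XI that by (auto simp: Xi_invariant_def)
      have arr: "Xi k T ord bm B \<alpha> *v w \<in> W (tgt \<alpha>)" if "\<alpha> \<in> arrows k T ord" "w \<in> W (src \<alpha>)" for \<alpha> w
        using XI that by (auto simp: Xi_invariant_def)
      have subS: "vec.subspace S" by (simp add: S_def)
      have projlin: "C.proj 0 p (c *s x + y) = c *s C.proj 0 p x + C.proj 0 p y" for p c x y
        by (simp add: C.proj_def vec_eq_iff)
      have projW: "C.proj 0 p v \<in> W p" if p: "p \<in> J k T 0" and v: "v \<in> S" for p v
        using v unfolding S_def
      proof (induction rule: vec.span_induct_alt)
        case base
        have "C.proj 0 p 0 = 0" by (simp add: C.proj_def vec_eq_iff)
        then show ?case using Wsub(1)[OF p] vec.subspace_0 by simp
      next
        case (step c x y)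
        then obtain q where q: "q \<in> J k T 0" "x \<in> W q" by blast
        have "C.proj 0 p x \<in> W p"
        proof -
          have xv: "x \<in> Vsp k T 0 q" using q Wsub(2)[OF q(1)] by blast
          show ?thesis
          proof (cases "q = p")
            case True
            have "C.proj 0 p x = x" using C.Vsp_proj[OF xv] True by simp
            then show ?thesis using q True by simp
          next
            case False
            then have "C.proj 0 p x = 0" using C.Vsp_proj_other[OF xv] by simp
            then show ?thesis using Wsub(1)[OF p] vec.subspace_0 by simp
          qed
        qed
        then show ?case unfolding projlin using step Wsub(1)[OF p] vec.subspace_add vec.subspace_scale by blast
      qed
      have WS: "W p \<subseteq> S" if "p \<in> J k T 0" for p
        using that unfolding S_def by (auto intro: vec.span_base)
      have grS: "C.graded 0 S"
        unfolding C.graded_def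
      proof (intro ballI allI)
        fix v p assume v: "v \<in> S"
        show "C.proj 0 p v \<in> S"
        proof (cases "p \<in> J k T 0")
          case True then show ?thesis using projW v WS by blast
        next
          case False
          then have "C.proj 0 p v = 0" using C.key_J by (auto simp: C.proj_def vec_eq_iff)
          then show ?thesis using subS vec.subspace_0 by simp
        qed
      qed
      have SV: "w \<in> W p" if "p \<in> J k T 0" "w \<in> S" "w \<in> Vsp k T 0 p" for p w
        using projW[OF that(1,2)] C.Vsp_proj[OF that(3)] by simp
      have blk_nz: "\<exists>a b'. key k T 0 a = q \<and> key k T 0 b' = p \<and> X $ a $ b' \<noteq> 0" if "block k T X p q \<noteq> 0" for X p q
      proof (rule ccontr)
        assume "\<not> ?thesis"
        then have "block k T X p q = 0" by (auto simp: block_def vec_eq_iff)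
        then show False using that by simp
      qed
      have bmP: "Pres S (bmR j)" if "j < k" for j
      proof (cases "j = 0")
        case True then show ?thesis using Pres_one[OF subS] bm0R by simp
      next
        case False
        have "invariant_under S (bm j)"
        proof (rule C.inv_blocks[OF subS grS])
          fix p q w assume pq: "p \<in> J k T 0" "q \<in> J k T 0" and w: "w \<in> S" "w \<in> Vsp k T 0 p"
          show "block k T (bm j) p q *v w \<in> S"
          proof (cases "block k T (bm j) p q = 0")
            case True then show ?thesis using subS vec.subspace_0 by simp
          next
            case False
            then obtain a b' where ab: "key k T 0 a = q" "key k T 0 b' = p" "bm j $ a $ b' \<noteq> 0"
              using blk_nz by blast
            have "u_minus k T ord j (bm j)" using bm_u \<open>j \<noteq> 0\<close> that by auto
            then have lt: "ltJ k ord j (key k T j b') (key k T j a)" using ab by (auto simp: u_minus_def)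
            have "Fwd p q j \<in> arrows k T ord"
              using C.mpq_ge[OF lt] C.lt_down[OF lt, of 0] ab pq \<open>j \<noteq> 0\<close> by (auto simp: arrows_def)
            moreover have "w \<in> W p" using SV pq w by blast
            ultimately have "Xi k T ord bm B (Fwd p q j) *v w \<in> W q" using arr by fastforce
            then show ?thesis using WS[OF pq(2)] \<open>j \<noteq> 0\<close> by (auto simp: Qmat_def)
          qed
        qed
        then show ?thesis by (simp add: bmR_def Pres_Abs)
      qed
      have PP: "Pres S (had (\<lambda>a b. if C.prec a b \<and> C.dif i a b then 1 else 0) (lm k (ginv bmR) \<beta> i))"
        if i: "1 \<le> i" "i < k" for i
      proof -
        have "invariant_under S (Pmat k T ord bm B i)"
        proof (rule C.inv_blocks[OF subS grS])
          fix p q w assume pq: "p \<in> J k T 0" "q \<in> J k T 0" and w: "w \<in> S" "w \<in> Vsp k T 0 p"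
          show "block k T (Pmat k T ord bm B i) p q *v w \<in> S"
          proof (cases "block k T (Pmat k T ord bm B i) p q = 0")
            case True then show ?thesis using subS vec.subspace_0 by simp
          next
            case False
            then obtain a b' where ab: "key k T 0 a = q" "key k T 0 b' = p" "Pmat k T ord bm B i $ a $ b' \<noteq> 0"
              using blk_nz by blast
            then have lt: "ltJ k ord i (key k T i a) (key k T i b')"
              by (auto simp: Pmat_def uplus_part_def split: if_splits)
            have "Bwd q p i \<in> arrows k T ord"
              using C.mpq_ge[OF lt] C.lt_down[OF lt, of 0] ab pq i by (auto simp: arrows_def)
            moreover have "w \<in> W p" using SV pq w by blast
            ultimately have "Xi k T ord bm B (Bwd q p i) *v w \<in> W q" using arr by fastforce
            then show ?thesis using WS[OF pq(2)] by auto
          qed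
        qed
        then show ?thesis using Pm_eq[OF i] by (simp add: Pres_Abs[symmetric])
      qed
      have "Pres S (\<beta> i)" if "1 \<le> i" "i < k" for i
        using D.i_core[OF subS grS bmP] PP that unfolding \<beta>_def by blast
      then show "\<forall>i\<in>{1..k - 1}. invariant_under (vec.span (\<Union>p\<in>J k T 0. W p)) (B i)"
        using \<beta>eq k unfolding S_def[symmetric] by (auto simp: Pres_Abs[symmetric])
    qed
  next
    show "\<forall>S. vec.subspace S \<and> (\<forall>i\<in>{1..k - 1}. invariant_under S (B i)) \<longrightarrow>
            S = vec.span (\<Union>p\<in>J k T 0. S \<inter> Vsp k T 0 p) \<and> Xi_invariant k T ord bm B (\<lambda>p. S \<inter> Vsp k T 0 p)"
    proof (intro allI impI)
      fix S assume h: "vec.subspace S \<and> (\<forall>i\<in>{1..k - 1}. invariant_under S (B i))"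
      then have subS: "vec.subspace S" by simp
      interpret PS: subalg "Pres S" by (rule D.Pres_subalg[OF subS])
      have \<beta>P: "Pres S (\<beta> i)" if "1 \<le> i" "i < k" for i
      proof -
        have "i \<in> {1..k - 1}" using that by auto
        then have "invariant_under S (B i)" using h by blast
        then have "Pres S (Abs (B i))" by (simp add: Pres_Abs)
        then show ?thesis using \<beta>eq[OF that] by simp
      qed
      have core: "C.graded 0 S \<and> (\<forall>j<k. Pres S (bmR j))"
        using D.ii_core[OF subS] \<beta>P unfolding \<beta>_def by blast
      then have grS: "C.graded 0 S" and bmP: "\<And>j. j < k \<Longrightarrow> Pres S (bmR j)" by auto
      have cP: "Pres S (ginv bmR j)" if "j < k" for j by (rule PS.Pginv) (use bmP that in auto)
      have PmP: "Pres S (Abs (Pmat k T ord bm B i))" if i: "1 \<le> i" "i < k" for i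
      proof -
        have "Pres S (lm k (ginv bmR) \<beta> i)" by (rule PS.Plm) (use cP \<beta>P i in auto)
        then show ?thesis unfolding Pm_eq[OF i] by (rule C.mask_Pres[OF subS grS _ D.keyinv0_U])
      qed
      have eq: "S = vec.span (\<Union>p\<in>J k T 0. S \<inter> Vsp k T 0 p)"
      proof
        show "vec.span (\<Union>p\<in>J k T 0. S \<inter> Vsp k T 0 p) \<subseteq> S"
          by (rule vec.span_minimal) (auto simp: subS)
        show "S \<subseteq> vec.span (\<Union>p\<in>J k T 0. S \<inter> Vsp k T 0 p)"
        proof
          fix v assume v: "v \<in> S"
          have "(\<Sum>p\<in>J k T 0. C.proj 0 p v) \<in> vec.span (\<Union>p\<in>J k T 0. S \<inter> Vsp k T 0 p)"
          proof (rule vec.span_sum)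
            fix p assume p: "p \<in> J k T 0"
            have "C.proj 0 p v \<in> S \<inter> Vsp k T 0 p" using grS v C.proj_Vsp by (simp add: C.graded_def)
            then show "C.proj 0 p v \<in> vec.span (\<Union>p\<in>J k T 0. S \<inter> Vsp k T 0 p)"
              using p by (auto intro: vec.span_base)
          qed
          then show "v \<in> vec.span (\<Union>p\<in>J k T 0. S \<inter> Vsp k T 0 p)" using C.proj_sum[of v] by simp
        qed
      qed
      have XI: "Xi_invariant k T ord bm B (\<lambda>p. S \<inter> Vsp k T 0 p)"
        unfolding Xi_invariant_def
      proof (intro conjI ballI)
        fix p assume "p \<in> J k T 0"
        show "vec.subspace (S \<inter> Vsp k T 0 p)" by (rule vec.subspace_inter[OF subS C.Vsp_sub])
        show "S \<inter> Vsp k T 0 p \<subseteq> Vsp k T 0 p" by blast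
      next
        fix \<alpha> w assume \<alpha>: "\<alpha> \<in> arrows k T ord" and w: "w \<in> S \<inter> Vsp k T 0 (src \<alpha>)"
        show "Xi k T ord bm B \<alpha> *v w \<in> S \<inter> Vsp k T 0 (tgt \<alpha>)"
        proof (cases \<alpha>)
          case (Fwd p q i)
          have a: "ltJ k ord 0 p q" "1 \<le> i" "i \<le> mpq k ord p q" using \<alpha> Fwd by (auto simp: arrows_def)
          have "i \<le> k - 2" using arrow_mpq[OF a(1,3)] .
          then have i: "1 \<le> i" "i < k" using a(2) k by arith+
          have wv: "w \<in> S" "w \<in> Vsp k T 0 p" using w Fwd by auto
          have "Xi k T ord bm B \<alpha> *v w = C.proj 0 q (bm i *v w)"
            using Fwd i(1) C.Vsp_proj[OF wv(2)] by (simp add: Qmat_def C.block_mv)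
          moreover have "bm i *v w \<in> S" using bmP[OF i(2)] wv(1) by (simp add: Pres_Abs bmR_def invariant_under_def)
          ultimately show ?thesis using grS C.proj_Vsp Fwd by (simp add: C.graded_def)
        next
          case (Bwd p q i)
          have a: "ltJ k ord 0 p q" "1 \<le> i" "i \<le> mpq k ord p q" using \<alpha> Bwd by (auto simp: arrows_def)
          have "i \<le> k - 2" using arrow_mpq[OF a(1,3)] .
          then have i: "1 \<le> i" "i < k" using a(2) k by arith+
          have wv: "w \<in> S" "w \<in> Vsp k T 0 q" using w Bwd by auto
          have "Xi k T ord bm B \<alpha> *v w = C.proj 0 p (Pmat k T ord bm B i *v w)"
            using Bwd C.Vsp_proj[OF wv(2)] by (simp add: C.block_mv)
          moreover have "Pmat k T ord bm B i *v w \<in> S" using PmP[OF i] wv(1) by (simp add: Pres_Abs invariant_under_def)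
          ultimately show ?thesis using grS C.proj_Vsp Bwd by (simp add: C.graded_def)
        qed
      qed
      show "S = vec.span (\<Union>p\<in>J k T 0. S \<inter> Vsp k T 0 p) \<and> Xi_invariant k T ord bm B (\<lambda>p. S \<inter> Vsp k T 0 p)"
        using eq XI by simp
    qed
  qed
qed

end
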